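(* Let $f:\mathbb{R}^{3}\to\mathbb{R}$ be normal, and for $k_{1},k_{2},k_{3}\neq0$ let $A(k_{1},y,z)=\lim_{r\to\infty}\int_{-r}^{r}f(x,y,z)e^{-ik_{1}x}dx$, $B(x,k_{2},z)=\lim_{r\to\infty}\int_{-r}^{r}f(x,y,z)e^{-ik_{2}y}dy$, $C(x,y,k_{3})=\lim_{r\to\infty}\int_{-r}^{r}f(x,y,z)e^{-ik_{3}z}dz$, $F(k_{1},k_{2},z)=\lim_{r,s\to\infty}\int_{-r}^{r}\int_{-s}^{s}f(x,y,z)e^{-ik_{1}x}e^{-ik_{2}y}dxdy$, $G(k_{1},y,k_{3})=\lim_{r,s\to\infty}\int_{-r}^{r}\int_{-s}^{s}f(x,y,z)e^{-ik_{1}x}e^{-ik_{3}z}dxdz$, $H(x,k_{2},k_{3})=\lim_{r,s\to\infty}\int_{-r}^{r}\int_{-s}^{s}f(x,y,z)e^{-ik_{2}y}e^{-ik_{3}z}dydz$. Then for $k_{1},k_{2},k_{3}\neq0$ the integrals $A(k_{1},k_{2},k_{3})=\int\!\!\int A(k_{1},y,z)e^{-ik_{2}y}e^{-ik_{3}z}dydz$, $B(k_{1},k_{2},k_{3})=\int\!\!\int B(x,k_{2},z)e^{-ik_{1}x}e^{-ik_{3}z}dxdz$, $C(k_{1},k_{2},k_{3})=\int\!\!\int C(x,y,k_{3})e^{-ik_{1}x}e^{-ik_{2}y}dxdy$, $F(k_{1},k_{2},k_{3})=\int F(k_{1},k_{2},z)e^{-ik_{3}z}dz$, $G(k_{1},k_{2},k_{3})=\int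 G(k_{1},y,k_{3})e^{-ik_{2}y}dy$, $H(k_{1},k_{2},k_{3})=\int H(x,k_{2},k_{3})e^{-ik_{1}x}dx$ (all over the whole real line / plane) are well defined, and $A=B=C=F=G=H$ at $(k_{1},k_{2},k_{3})$, with common value $\lim_{r,s,t\to\infty}\int_{-r}^{r}\int_{-s}^{s}\int_{-t}^{t}f(x,y,z)e^{-ik_{1}x}e^{-ik_{2}y}e^{-ik_{3}z}\,dx\,dy\,dz$.
   Context: One-variable: a smooth $g:\mathbb{R}\setminus V\to\mathbb{R}$, $V$ bounded closed, is analytic at infinity if there exist $\epsilon_{1},\epsilon_{2}>0$ with $g(1/t)=\sum_{n\geq1}a_{n}t^{n}$ on $(0,\epsilon_{1})$ and $g(1/t)=\sum_{n\geq1}b_{n}t^{n}$ on $(-\epsilon_{2},0)$, real coefficients, both series absolutely convergent there. Two variables: for smooth $h:\mathbb{R}^{2}\setminus W\to\mathbb{R}$, $W$ closed bounded: very moderate decrease means $|h(u,v)|\leq C/|(u,v)|$ for $|(u,v)|>1$; moderate decrease means $|h|\leq C/|(u,v)|^{2}$ for $|(u,v)|>1$. With fibres $h_{u}(v)=h(u,v)$, $h_{v}(u)=h(u,v)$, $h$ is normal if (i) every $h_{u}$ is analytic at infinity; (ii) every $h_{v}$ is analytic at infinity; (iii) $h$ is of very moderate decrease; (iv) $\partial h/\partial u$, $\partial h/\partial v$ are of moderate decrease; (v) there is a uniform bound on the number of zeros of $h_{u},(h_{u})',(h_{u})'',h_{v},(h_{v})',(h_{v})''$. Three variables: smooth $f:\mathbb{R}^{3}\to\mathbb{R}$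 is of very moderate decrease if $|f(x,y,z)|\leq C/|(x,y,z)|$ for $|(x,y,z)|>1$, of moderate decrease $n$ ($n\geq2$) if $|f|\leq C/|(x,y,z)|^{n}$ there. Fibres: $f_{x}(y,z)=f(x,y,z)$ etc., and $f_{x,y}(z)=f(x,y,z)$, $f_{x,z}(y)$, $f_{y,z}(x)$ similarly. $f$ is normal if: (i) for every $x$, $f_{x}(y,z)$ is normal; (ii) for every $y$, $f_{y}(x,z)$ is normal; (iii) for every $z$, $f_{z}(x,y)$ is normal; (iv) $f$ is of very moderate decrease; (v) for $i+j+k\geq1$, $\frac{\partial^{i+j+k}f}{\partial x^{i}\partial y^{j}\partial z^{k}}$ is of moderate decrease $i+j+k+1$; (vi) there is a uniform bound on the number of zeros of $f_{x,y}$ and its first four derivatives, and similarly for $f_{x,z}$, $f_{y,z}$. *)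

theory Defs
  imports "HOL-Analysis.Analysis"
begin

text \<open>The Euclidean norm of (u,v) resp. (x,y,z) is norm (u,v) resp. norm (x,y,z)
  on the product types (the product norm is Euclidean).\<close>

definition smooth1_on :: "real set \<Rightarrow> (real \<Rightarrow> real) \<Rightarrow> bool" where
  "smooth1_on U g \<longleftrightarrow> (\<forall>n x. x \<in> U \<longrightarrow> ((deriv ^^ n) g) field_differentiable (at x))"

datatype dir2 = DU | DV

fun pd2 :: "dir2 \<Rightarrow> (real \<Rightarrow> real \<Rightarrow> real) \<Rightarrow> (real \<Rightarrow> real \<Rightarrow> real)" where
  "pd2 DU h = (\<lambda>u v. deriv (\<lambda>t. h t v) u)"
| "pd2 DV h = (\<lambda>u v. deriv (\<lambda>t. h u t) v)"

definition smooth2_on :: "(real \<times> real) set \<Rightarrow> (real \<Rightarrow> real \<Rightarrow> real) \<Rightarrow> bool" where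
  "smooth2_on U h \<longleftrightarrow> open U \<and> (\<forall>ds. let g = foldr pd2 ds h in
      continuous_on U (\<lambda>p. g (fst p) (snd p)) \<and>
      (\<forall>u v. (u, v) \<in> U \<longrightarrow> (\<lambda>t. g t v) field_differentiable (at u)
                          \<and> (\<lambda>t. g u t) field_differentiable (at v)))"

datatype dir3 = DX | DY | DZ

fun pd3 :: "dir3 \<Rightarrow> (real \<Rightarrow> real \<Rightarrow> real \<Rightarrow> real) \<Rightarrow> (real \<Rightarrow> real \<Rightarrow> real \<Rightarrow> real)" where
  "pd3 DX f = (\<lambda>x y z. deriv (\<lambda>t. f t y z) x)"
| "pd3 DY f = (\<lambda>x y z. deriv (\<lambda>t. f x t z) y)"
| "pd3 DZ f = (\<lambda>x y z. deriv (\<lambda>t. f x y t) z)"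

definition smooth3 :: "(real \<Rightarrow> real \<Rightarrow> real \<Rightarrow> real) \<Rightarrow> bool" where
  "smooth3 f \<longleftrightarrow> (\<forall>ds. let g = foldr pd3 ds f in
      continuous_on UNIV (\<lambda>p. g (fst p) (fst (snd p)) (snd (snd p))) \<and>
      (\<forall>x y z. (\<lambda>t. g t y z) field_differentiable (at x)
             \<and> (\<lambda>t. g x t z) field_differentiable (at y)
             \<and> (\<lambda>t. g x y t) field_differentiable (at z)))"

definition mixed_pd :: "nat \<Rightarrow> nat \<Rightarrow> nat \<Rightarrow> (real \<Rightarrow> real \<Rightarrow> real \<Rightarrow> real) \<Rightarrow> (real \<Rightarrow> real \<Rightarrow> real \<Rightarrow> real)" where
  "mixed_pd i j k f = (pd3 DX ^^ i) ((pd3 DY ^^ j) ((pd3 DZ ^^ k) f))"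

definition analytic_at_infinity :: "real set \<Rightarrow> (real \<Rightarrow> real) \<Rightarrow> bool" where
  "analytic_at_infinity V g \<longleftrightarrow>
     (\<exists>e1 e2 (a :: nat \<Rightarrow> real) (b :: nat \<Rightarrow> real). e1 > 0 \<and> e2 > 0 \<and>
        (\<forall>t. 0 < t \<and> t < e1 \<longrightarrow> 1 / t \<notin> V \<and>
              summable (\<lambda>n. \<bar>a (Suc n) * t ^ Suc n\<bar>) \<and>
              (\<lambda>n. a (Suc n) * t ^ Suc n) sums g (1 / t)) \<and>
        (\<forall>t. - e2 < t \<and> t < 0 \<longrightarrow> 1 / t \<notin> V \<and>
              summable (\<lambda>n. \<bar>b (Suc n) * t ^ Suc n\<bar>) \<and>
              (\<lambda>n. b (Suc n) * t ^ Suc n) sums g (1 / t)))"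

definition normal2 :: "(real \<times> real) set \<Rightarrow> (real \<Rightarrow> real \<Rightarrow> real) \<Rightarrow> bool" where
  "normal2 W h \<longleftrightarrow> closed W \<and> bounded W \<and> smooth2_on (- W) h \<and>
     \<comment> \<open>(i)\<close> (\<forall>u. analytic_at_infinity {v. (u, v) \<in> W} (\<lambda>v. h u v)) \<and>
     \<comment> \<open>(ii)\<close> (\<forall>v. analytic_at_infinity {u. (u, v) \<in> W} (\<lambda>u. h u v)) \<and>
     \<comment> \<open>(iii) very moderate decrease\<close>
     (\<exists>C. \<forall>u v. (u, v) \<notin> W \<and> norm (u, v) > 1 \<longrightarrow> \<bar>h u v\<bar> \<le> C / norm (u, v)) \<and>
     \<comment> \<open>(iv) partial derivatives of moderate decrease\<close>
     (\<exists>C. \<forall>u v. (u, v) \<notin> W \<and> norm (u, v) > 1 \<longrightarrow> \<bar>pd2 DU h u v\<bar> \<le> C / norm (u, v) ^ 2) \<and>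
     (\<exists>C. \<forall>u v. (u, v) \<notin> W \<and> norm (u, v) > 1 \<longrightarrow> \<bar>pd2 DV h u v\<bar> \<le> C / norm (u, v) ^ 2) \<and>
     \<comment> \<open>(v) uniform bound on numbers of zeros of fibres and their first two derivatives\<close>
     (\<exists>N :: nat. \<forall>m \<le> 2.
        (\<forall>u. finite {v. (u, v) \<notin> W \<and> (deriv ^^ m) (\<lambda>v. h u v) v = 0} \<and>
             card {v. (u, v) \<notin> W \<and> (deriv ^^ m) (\<lambda>v. h u v) v = 0} \<le> N) \<and>
        (\<forall>v. finite {u. (u, v) \<notin> W \<and> (deriv ^^ m) (\<lambda>u. h u v) u = 0} \<and>
             card {u. (u, v) \<notin> W \<and> (deriv ^^ m) (\<lambda>u. h u v) u = 0} \<le> N))"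

definition normal3 :: "(real \<Rightarrow> real \<Rightarrow> real \<Rightarrow> real) \<Rightarrow> bool" where
  "normal3 f \<longleftrightarrow> smooth3 f \<and>
     \<comment> \<open>(i)-(iii): two-variable fibres are normal (with empty exceptional set)\<close>
     (\<forall>x. normal2 {} (\<lambda>y z. f x y z)) \<and>
     (\<forall>y. normal2 {} (\<lambda>x z. f x y z)) \<and>
     (\<forall>z. normal2 {} (\<lambda>x y. f x y z)) \<and>
     \<comment> \<open>(iv) very moderate decrease\<close>
     (\<exists>C. \<forall>x y z. norm (x, y, z) > 1 \<longrightarrow> \<bar>f x y z\<bar> \<le> C / norm (x, y, z)) \<and>
     \<comment> \<open>(v) derivatives of order i+j+k >= 1 of moderate decrease i+j+k+1\<close>
     (\<forall>i j k. i + j + k \<ge> 1 \<longrightarrow>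
        (\<exists>C. \<forall>x y z. norm (x, y, z) > 1 \<longrightarrow>
           \<bar>mixed_pd i j k f x y z\<bar> \<le> C / norm (x, y, z) ^ (i + j + k + 1))) \<and>
     \<comment> \<open>(vi) uniform bound on zeros of one-variable fibres and first four derivatives\<close>
     (\<exists>N :: nat. \<forall>m \<le> 4.
        (\<forall>x y. finite {z. (deriv ^^ m) (\<lambda>z. f x y z) z = 0} \<and>
               card {z. (deriv ^^ m) (\<lambda>z. f x y z) z = 0} \<le> N) \<and>
        (\<forall>x z. finite {y. (deriv ^^ m) (\<lambda>y. f x y z) y = 0} \<and>
               card {y. (deriv ^^ m) (\<lambda>y. f x y z) y = 0} \<le> N) \<and>
        (\<forall>y z. finite {x. (deriv ^^ m) (\<lambda>x. f x y z) x = 0} \<and>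
               card {x. (deriv ^^ m) (\<lambda>x. f x y z) x = 0} \<le> N))"

definition ft1 :: "(real \<Rightarrow> complex) \<Rightarrow> real \<Rightarrow> real \<Rightarrow> complex" where
  "ft1 g k r = integral {-r..r} (\<lambda>a. g a * cis (- (k * a)))"

definition ft2 :: "(real \<Rightarrow> real \<Rightarrow> complex) \<Rightarrow> real \<Rightarrow> real \<Rightarrow> real \<Rightarrow> real \<Rightarrow> complex" where
  "ft2 g k1 k2 r s = integral {-r..r} (\<lambda>b. integral {-s..s}
      (\<lambda>a. g a b * cis (- (k1 * a)) * cis (- (k2 * b))))"

definition ft3 :: "(real \<Rightarrow> real \<Rightarrow> real \<Rightarrow> complex) \<Rightarrow> real \<Rightarrow> real \<Rightarrow> real \<Rightarrow> real \<Rightarrow> real \<Rightarrow> real \<Rightarrow> complex" where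
  "ft3 g k1 k2 k3 r s t = integral {-r..r} (\<lambda>c. integral {-s..s} (\<lambda>b. integral {-t..t}
      (\<lambda>a. g a b c * cis (- (k1 * a)) * cis (- (k2 * b)) * cis (- (k3 * c)))))"

definition fourier1 :: "(real \<Rightarrow> complex) \<Rightarrow> real \<Rightarrow> complex" where
  "fourier1 g k = Lim at_top (\<lambda>r. ft1 g k r)"

definition fourier2 :: "(real \<Rightarrow> real \<Rightarrow> complex) \<Rightarrow> real \<Rightarrow> real \<Rightarrow> complex" where
  "fourier2 g k1 k2 = Lim (at_top \<times>\<^sub>F at_top) (\<lambda>(r, s). ft2 g k1 k2 r s)"

end

theory Submission
  imports Defs
begin

definition EE :: "real \<Rightarrow> real \<Rightarrow> complex" where
  "EE k a = cis (- (k * a))"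

definition I1 :: "real \<Rightarrow> real \<Rightarrow> (real \<Rightarrow> complex) \<Rightarrow> complex" where
  "I1 k t \<phi> = integral {-t..t} (\<lambda>a. \<phi> a * EE k a)"

definition P1 :: "real \<Rightarrow> real \<Rightarrow> (real \<Rightarrow> complex) \<Rightarrow> complex" where
  "P1 k t \<phi> = (\<phi> t * EE k t - \<phi> (-t) * EE k (-t)) / (- (\<i> * of_real k))"

lemma norm_EE [simp]: "norm (EE k a) = 1"
  by (simp add: EE_def)

lemma EE_deriv: "((EE k) has_vector_derivative (- (\<i> * of_real k)) * EE k a) (at a within S)"
proof -
  have D: "((\<lambda>z. exp (- (\<i> * of_real k * z))) has_field_derivative
     (- (\<i> * of_real k)) * exp (- (\<i> * of_real k * of_real a))) (at (of_real a))"
    by (auto intro!: derivative_eq_intros)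
  have eq: "EE k = (\<lambda>x. exp (- (\<i> * of_real k * of_real x)))"
    by (simp add: EE_def cis_conv_exp fun_eq_iff algebra_simps)
  from has_vector_derivative_real_field[OF D, of S]
  show ?thesis
    by (subst eq) (simp add: eq)
qed

lemma continuous_on_EE [continuous_intros]: "continuous_on S (EE k)"
  unfolding EE_def by (intro continuous_intros)

lemma continuous_on_EE' [continuous_intros]: "continuous_on S g \<Longrightarrow> continuous_on S (\<lambda>x. EE k (g x))"
  unfolding EE_def by (intro continuous_intros)

lemma ibp1:
  assumes t: "t \<ge> 0" and k: "k \<noteq> 0"
    and d: "\<And>a. (\<phi> has_vector_derivative \<phi>' a) (at a)"
    and c: "continuous_on UNIV \<phi>'"
  shows "I1 k t \<phi> = P1 k t \<phi> + (1 / (\<i> * of_real k)) * I1 k t \<phi>'"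
proof -
  define c0 where "c0 = - (\<i> * of_real k)"
  have c0: "c0 \<noteq> 0" using k by (simp add: c0_def)
  define \<psi> where "\<psi> a = EE k a * inverse c0" for a
  have dpsi: "(\<psi> has_vector_derivative EE k a) (at a within S)" for a S
    unfolding \<psi>_def
    by (rule has_vector_derivative_eq_rhs[OF has_vector_derivative_mult_left[OF EE_deriv[of k a S], of "inverse c0"]])
       (use c0 in \<open>auto simp: c0_def field_simps\<close>)
  have cphi: "continuous_on UNIV \<phi>"
    using d has_vector_derivative_continuous continuous_at_imp_continuous_on by blast
  have "((\<lambda>a. \<phi> a * \<psi> a) has_vector_derivative \<phi> a * EE k a + \<phi>' a * \<psi> a) (at a within {-t..t})" for a
    using has_vector_derivative_mult[OF has_vector_derivative_at_within[OF d[of a]] dpsi[of a]] .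
  then have ftc: "((\<lambda>a. \<phi> a * EE k a + \<phi>' a * \<psi> a) has_integral
      (\<phi> t * \<psi> t - \<phi> (-t) * \<psi> (-t))) {-t..t}"
    using fundamental_theorem_of_calculus[of "-t" t "\<lambda>a. \<phi> a * \<psi> a"] t by auto
  have i1: "(\<lambda>a. \<phi> a * EE k a) integrable_on {-t..t}"
    by (intro integrable_continuous_interval continuous_intros continuous_on_subset[OF cphi]) auto
  have i2: "(\<lambda>a. \<phi>' a * EE k a) integrable_on {-t..t}"
    by (intro integrable_continuous_interval continuous_intros continuous_on_subset[OF c]) auto
  have i3: "(\<lambda>a. \<phi>' a * \<psi> a) integrable_on {-t..t}"
    unfolding \<psi>_def
    by (intro integrable_continuous_interval continuous_intros continuous_on_subset[OF c]) (auto simp: c0)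
  have "integral {-t..t} (\<lambda>a. \<phi> a * EE k a + \<phi>' a * \<psi> a) = \<phi> t * \<psi> t - \<phi> (-t) * \<psi> (-t)"
    using ftc by (rule integral_unique)
  then have "I1 k t \<phi> + integral {-t..t} (\<lambda>a. \<phi>' a * \<psi> a) = \<phi> t * \<psi> t - \<phi> (-t) * \<psi> (-t)"
    unfolding I1_def by (subst (asm) integral_add[OF i1 i3]) simp
  moreover have "integral {-t..t} (\<lambda>a. \<phi>' a * \<psi> a) = I1 k t \<phi>' / c0"
    unfolding I1_def \<psi>_def by (simp add: integral_mult_left[symmetric] divide_inverse mult.assoc)
  ultimately show ?thesis
    unfolding P1_def \<psi>_def c0_def[symmetric] using c0
    by (simp add: field_simps c0_def)
qed

type_synonym p3 = "real \<times> real \<times> real"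

fun crd :: "dir3 \<Rightarrow> p3 \<Rightarrow> real" where
  "crd DX p = fst p" | "crd DY p = fst (snd p)" | "crd DZ p = snd (snd p)"

fun upd :: "dir3 \<Rightarrow> real \<Rightarrow> p3 \<Rightarrow> p3" where
  "upd DX a p = (a, fst (snd p), snd (snd p))"
| "upd DY a p = (fst p, a, snd (snd p))"
| "upd DZ a p = (fst p, fst (snd p), a)"

lemma crd_upd [simp]: "crd d (upd d a p) = a"
  by (cases d) auto

lemma crd_upd_other [simp]: "d \<noteq> d' \<Longrightarrow> crd d' (upd d a p) = crd d' p"
  by (cases d; cases d') auto

lemma upd_upd [simp]: "upd d a (upd d b p) = upd d a p"
  by (cases d) auto

lemma upd_comm: "d \<noteq> d' \<Longrightarrow> upd d a (upd d' b p) = upd d' b (upd d a p)"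
  by (cases d; cases d') auto

lemma upd_crd [simp]: "upd d (crd d p) p = p"
  by (cases d) auto

lemma continuous_on_upd [continuous_intros]:
  "continuous_on S g \<Longrightarrow> continuous_on S h \<Longrightarrow> continuous_on S (\<lambda>x. upd d (g x) (h x))"
  by (cases d) (auto intro!: continuous_intros)

lemma continuous_on_crd [continuous_intros]:
  "continuous_on S h \<Longrightarrow> continuous_on S (\<lambda>x. crd d (h x))"
  by (cases d) (auto intro!: continuous_intros)

definition IO :: "dir3 \<Rightarrow> real \<Rightarrow> real \<Rightarrow> (p3 \<Rightarrow> complex) \<Rightarrow> p3 \<Rightarrow> complex" where
  "IO d k t H = (\<lambda>p. I1 k t (\<lambda>a. H (upd d a p)))"

definition PO :: "dir3 \<Rightarrow> real \<Rightarrow> real \<Rightarrow> (p3 \<Rightarrow> complex) \<Rightarrow> p3 \<Rightarrow> complex" where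
  "PO d k t H = (\<lambda>p. P1 k t (\<lambda>a. H (upd d a p)))"

definition HD :: "dir3 \<Rightarrow> (p3 \<Rightarrow> complex) \<Rightarrow> (p3 \<Rightarrow> complex) \<Rightarrow> bool" where
  "HD d H H' \<longleftrightarrow> (\<forall>q a. ((\<lambda>b. H (upd d b q)) has_vector_derivative H' (upd d a q)) (at a))"

lemma HD_D: "HD d H H' \<Longrightarrow> ((\<lambda>b. H (upd d b q)) has_vector_derivative H' (upd d a q)) (at a)"
  unfolding HD_def by blast

abbreviation cont :: "(p3 \<Rightarrow> complex) \<Rightarrow> bool" where
  "cont H \<equiv> continuous_on UNIV H"

lemma cont_comp_upd:
  assumes "cont H" "continuous_on S g" "continuous_on S h"
  shows "continuous_on S (\<lambda>x. H (upd d (g x) (h x)))"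
  by (rule continuous_on_compose2[OF assms(1)]) (auto intro!: continuous_intros assms(2,3))

lemma cont_IO [continuous_intros]:
  assumes "cont H" shows "cont (IO d k t H)"
proof -
  have "continuous_on (UNIV \<times> cbox (-t) t) (\<lambda>(p, a). H (upd d a p) * EE k a)"
    unfolding case_prod_unfold
    by (intro continuous_intros cont_comp_upd[OF assms]) 
  from integral_continuous_on_param[OF this]
  show ?thesis unfolding IO_def I1_def by simp
qed

lemma cont_PO [continuous_intros]:
  assumes "cont H" shows "cont (PO d k t H)"
  unfolding PO_def P1_def divide_inverse
  by (intro continuous_intros cont_comp_upd[OF assms])

lemma IO_upd [simp]: "IO d k t H (upd d a p) = IO d k t H p"
  by (simp add: IO_def)

lemma PO_upd [simp]: "PO d k t H (upd d a p) = PO d k t H p"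
  by (simp add: PO_def)

lemma HD_IO:
  assumes dd: "d \<noteq> d'" and hd: "HD d' H H'" and c: "cont H" and c': "cont H'"
  shows "HD d' (IO d k t H) (IO d k t H')"
  unfolding HD_def
proof (intro allI)
  fix q a0
  define f where "f b a = H (upd d a (upd d' b q)) * EE k a" for b a
  define fx where "fx b a = H' (upd d a (upd d' b q)) * EE k a" for b a
  have 1: "((\<lambda>b. f b a) has_vector_derivative fx b a) (at b within UNIV)" for b a
  proof -
    have "((\<lambda>b. H (upd d' b (upd d a q))) has_vector_derivative H' (upd d' b (upd d a q))) (at b)"
      using hd unfolding HD_def by blast
    from has_vector_derivative_mult_left[OF this, of "EE k a"]
    show ?thesis unfolding f_def fx_def using upd_comm[OF dd] by simp
  qed
  have 2: "f b integrable_on cbox (-t) t" for b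
    unfolding f_def
    by (intro integrable_continuous continuous_intros cont_comp_upd[OF c])
  have 3: "continuous_on (UNIV \<times> cbox (-t) t) (\<lambda>(b, a). fx b a)"
    unfolding fx_def case_prod_unfold
    by (intro continuous_intros cont_comp_upd[OF c'])
  from leibniz_rule_vector_derivative[of UNIV "-t" t f fx, OF 1 2 3]
  show "((\<lambda>b. IO d k t H (upd d' b q)) has_vector_derivative IO d k t H' (upd d' a0 q)) (at a0)"
    unfolding IO_def I1_def f_def fx_def by simp
qed

lemma HD_PO:
  assumes dd: "d \<noteq> d'" and hd: "HD d' H H'"
  shows "HD d' (PO d k t H) (PO d k t H')"
  unfolding HD_def
proof (intro allI)
  fix q a0
  have D: "((\<lambda>b. H (upd d c (upd d' b q))) has_vector_derivative H' (upd d c (upd d' a0 q))) (at a0)" for c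
    using HD_D[OF hd, of "upd d c q" a0] by (simp add: upd_comm[OF dd])
  show "((\<lambda>b. PO d k t H (upd d' b q)) has_vector_derivative PO d k t H' (upd d' a0 q)) (at a0)"
    unfolding PO_def P1_def
    by (intro has_vector_derivative_eq_rhs[OF has_vector_derivative_divide[OF has_vector_derivative_diff[OF
          has_vector_derivative_mult_left[OF D] has_vector_derivative_mult_left[OF D]]]]) simp
qed

lemma IBP_IO:
  assumes hd: "HD d H H'" and c': "cont H'" and t: "t \<ge> 0" and k: "k \<noteq> 0"
  shows "IO d k t H = (\<lambda>p. PO d k t H p + (1 / (\<i> * of_real k)) * IO d k t H' p)"
proof
  fix p
  have "((\<lambda>b. H (upd d b p)) has_vector_derivative H' (upd d a p)) (at a)" for a
    using hd unfolding HD_def by blast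
  moreover have "continuous_on UNIV (\<lambda>a. H' (upd d a p))"
    by (intro cont_comp_upd[OF c'] continuous_intros)
  ultimately show "IO d k t H p = PO d k t H p + (1 / (\<i> * of_real k)) * IO d k t H' p"
    unfolding IO_def PO_def by (intro ibp1[OF t k])
qed

lemma integrable_IO_line:
  assumes "cont H" shows "(\<lambda>a. H (upd d a p) * EE k a) integrable_on {a0..b0}"
  by (intro integrable_continuous_interval continuous_intros cont_comp_upd[OF assms])

lemma IO_add:
  assumes "cont H1" "cont H2"
  shows "IO d k t (\<lambda>p. H1 p + H2 p) = (\<lambda>p. IO d k t H1 p + IO d k t H2 p)"
  unfolding IO_def I1_def
  using integral_add[OF integrable_IO_line[OF assms(1)] integrable_IO_line[OF assms(2)]]
  by (simp add: distrib_right)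

lemma IO_diff:
  assumes "cont H1" "cont H2"
  shows "IO d k t (\<lambda>p. H1 p - H2 p) = (\<lambda>p. IO d k t H1 p - IO d k t H2 p)"
  unfolding IO_def I1_def
  using integral_diff[OF integrable_IO_line[OF assms(1)] integrable_IO_line[OF assms(2)]]
  by (simp add: left_diff_distrib)

lemma IO_cmult:
  "IO d k t (\<lambda>p. c * H p) = (\<lambda>p. c * IO d k t H p)"
  unfolding IO_def I1_def
  by (simp add: mult.assoc integral_mult_right)

lemma PO_add:
  "PO d k t (\<lambda>p. H1 p + H2 p) = (\<lambda>p. PO d k t H1 p + PO d k t H2 p)"
  unfolding PO_def P1_def by (simp add: fun_eq_iff diff_divide_distrib add_divide_distrib algebra_simps)

lemma PO_cmult:
  "PO d k t (\<lambda>p. c * H p) = (\<lambda>p. c * PO d k t H p)"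
  unfolding PO_def P1_def by (simp add: fun_eq_iff field_simps)

lemma IO_commute:
  assumes dd: "d1 \<noteq> d2" and c: "cont H"
  shows "IO d1 k1 t1 (IO d2 k2 t2 H) = IO d2 k2 t2 (IO d1 k1 t1 H)"
proof
  fix p
  define g where "g a b = H (upd d2 b (upd d1 a p)) * EE k2 b * EE k1 a" for a b
  have cg: "continuous_on (cbox (-t1, -t2) (t1, t2)) (\<lambda>(x, y). g x y)"
    unfolding g_def case_prod_unfold
    by (intro continuous_intros cont_comp_upd[OF c])
  have "IO d1 k1 t1 (IO d2 k2 t2 H) p = integral (cbox (-t1) t1) (\<lambda>a. integral (cbox (-t2) t2) (g a))"
    unfolding IO_def I1_def g_def by (simp add: integral_mult_left)
  also have "\<dots> = integral (cbox (-t2) t2) (\<lambda>b. integral (cbox (-t1) t1) (\<lambda>a. g a b))"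
    by (rule integral_swap_continuous[OF cg])
  also have "\<dots> = IO d2 k2 t2 (IO d1 k1 t1 H) p"
    unfolding IO_def I1_def g_def
    unfolding cbox_interval
    by (intro integral_cong) (simp add: integral_mult_left[symmetric] integral_mult_right[symmetric] upd_comm[OF dd] mult_ac)
  finally show "IO d1 k1 t1 (IO d2 k2 t2 H) p = IO d2 k2 t2 (IO d1 k1 t1 H) p" .
qed


section \<open>Weights\<close>

definition w :: "real \<Rightarrow> real \<Rightarrow> real" where
  "w e a = (1 + \<bar>a\<bar>) powr (- e)"

lemma w_pos: "w e a > 0"
  unfolding w_def by simp

lemma w_nonneg: "w e a \<ge> 0"
  using w_pos[of e a] by simp

lemma w_le1: "e \<ge> 0 \<Longrightarrow> w e a \<le> 1"
proof -
  assume e: "e \<ge> 0"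
  have "1 \<le> (1 + \<bar>a\<bar>) powr e" by (rule ge_one_powr_ge_zero) (use e in auto)
  then show ?thesis unfolding w_def by (simp add: powr_minus inverse_le_1_iff)
qed

lemma w_0 [simp]: "w 0 a = 1"
  unfolding w_def by simp

lemma w_minus [simp]: "w e (- a) = w e a"
  unfolding w_def by simp

lemma w_mono: "e \<ge> 0 \<Longrightarrow> 0 \<le> t \<Longrightarrow> t \<le> t' \<Longrightarrow> w e t' \<le> w e t"
  unfolding w_def by (intro powr_mono2') auto

lemma continuous_on_w [continuous_intros]: "continuous_on S (w e)"
  unfolding w_def by (intro continuous_intros) auto

lemma w_has_integral:
  assumes "0 \<le> t" "t \<le> t'"
  shows "(w (4/3) has_integral 3 * (w (1/3) t - w (1/3) t')) {t..t'}"
proof -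
  define F where "F a = - 3 * (1 + a) powr (- 1/3)" for a :: real
  have "(F has_real_derivative w (4/3) x) (at x within {t..t'})" if "x \<in> {t..t'}" for x
  proof -
    have x: "x \<ge> 0" using that assms by auto
    have "(F has_real_derivative (- 3) * ((1 + x) powr (- 1/3) * (0 * ln (1 + x) + 1 * (- 1/3) / (1 + x)))) (at x)"
      unfolding F_def
      by (intro DERIV_cmult DERIV_powr) (use x in \<open>auto intro!: derivative_eq_intros\<close>)
    moreover have "(- 3) * ((1 + x) powr (- 1/3) * (0 * ln (1 + x) + 1 * (- 1/3) / (1 + x))) = w (4/3) x"
    proof -
      have "(1 + x) powr (- 1/3 - 1) = (1 + x) powr (- 1/3) / (1 + x) powr 1"
        by (rule powr_diff)
      then have "(1 + x) powr (- 1/3) / (1 + x) = (1 + x) powr (- 4/3)"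
        using x by simp
      moreover have "- 3 * ((1 + x) powr (- 1/3) * (0 * ln (1 + x) + 1 * (- 1/3) / (1 + x))) = (1 + x) powr (- 1/3) / (1 + x)"
        using x by (simp add: field_simps)
      ultimately show ?thesis unfolding w_def using x by simp
    qed
    ultimately show ?thesis by (simp add: has_field_derivative_at_within)
  qed
  then have "(w (4/3) has_integral F t' - F t) {t..t'}"
    using assms by (intro fundamental_theorem_of_calculus) (auto simp: has_real_derivative_iff_has_vector_derivative)
  moreover have "F t' - F t = 3 * (w (1/3) t - w (1/3) t')"
    unfolding F_def w_def using assms by (simp add: algebra_simps)
  ultimately show ?thesis by simp
qed

lemma w_integral_pos:
  assumes "0 \<le> t" "t \<le> t'"
  shows "integral {t..t'} (w (4/3)) \<le> 3 * w (1/3) t"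
  using integral_unique[OF w_has_integral[OF assms]] w_nonneg[of "1/3" t'] by simp

lemma w_integral_neg:
  assumes "0 \<le> t" "t \<le> t'"
  shows "integral {-t'..-t} (w (4/3)) \<le> 3 * w (1/3) t"
proof -
  have "integral {-t'..-t} (w (4/3)) = integral {-t'..-t} (\<lambda>x. w (4/3) (- x))" by simp
  also have "\<dots> = integral {t..t'} (w (4/3))" by (rule Henstock_Kurzweil_Integration.integral_reflect_real)
  finally show ?thesis using w_integral_pos[OF assms] by simp
qed

lemma integrable_w [intro]: "w e integrable_on {a..b}"
  by (intro integrable_continuous_interval continuous_intros)

lemma w_integral_sym:
  assumes "0 \<le> t"
  shows "integral {-t..t} (w (4/3)) \<le> 6"
proof -
  have "integral {-t..t} (w (4/3)) = integral {-t..-0} (w (4/3)) + integral {0..t} (w (4/3))"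
    using Henstock_Kurzweil_Integration.integral_combine[of "-t" 0 t "w (4/3)", OF _ _ integrable_w] assms by auto
  also have "\<dots> \<le> 3 * w (1/3) 0 + 3 * w (1/3) 0"
    by (intro add_mono w_integral_neg w_integral_pos assms) auto
  finally show ?thesis by (simp add: w_def)
qed

definition wp :: "(dir3 \<Rightarrow> real) \<Rightarrow> p3 \<Rightarrow> real" where
  "wp e q = w (e DX) (crd DX q) * w (e DY) (crd DY q) * w (e DZ) (crd DZ q)"

lemma wp_pos: "wp e q > 0"
  unfolding wp_def by (intro mult_pos_pos w_pos)

lemma wp_upd: "wp e (upd d a q) = w (e d) a * wp (e(d:=0)) q"
  unfolding wp_def by (cases d) auto

lemma wp_le1: "(\<And>d. e d \<ge> 0) \<Longrightarrow> wp e q \<le> 1"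
  unfolding wp_def by (intro mult_le_one w_le1 w_nonneg mult_nonneg_nonneg) auto

definition Bd :: "(p3 \<Rightarrow> complex) \<Rightarrow> real \<Rightarrow> (dir3 \<Rightarrow> real) \<Rightarrow> bool" where
  "Bd H M e \<longleftrightarrow> (\<forall>q. norm (H q) \<le> M * wp e q)"

lemma BdD: "Bd H M e \<Longrightarrow> norm (H q) \<le> M * wp e q"
  unfolding Bd_def by blast

lemma Bd_M_nonneg: "Bd H M e \<Longrightarrow> M \<ge> 0"
  unfolding Bd_def
  by (metis norm_ge_zero order_trans wp_pos zero_le_mult_iff not_le)

lemma Bd_mono: "Bd H M e \<Longrightarrow> M \<le> M' \<Longrightarrow> Bd H M' e"
  unfolding Bd_def by (meson mult_right_mono order_trans less_imp_le wp_pos)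

lemma Bd_final: "Bd H M e \<Longrightarrow> (\<And>d. e d \<ge> 0) \<Longrightarrow> norm (H p) \<le> M"
  unfolding Bd_def
  by (metis Bd_M_nonneg Bd_def mult_left_le order_trans wp_le1)

lemma Bd_cmult: "Bd H M e \<Longrightarrow> Bd (\<lambda>p. c * H p) (norm c * M) e"
  unfolding Bd_def by (simp add: norm_mult mult.assoc mult_left_mono)

lemma Bd_add: "Bd H1 M1 e \<Longrightarrow> Bd H2 M2 e \<Longrightarrow> Bd (\<lambda>p. H1 p + H2 p) (M1 + M2) e"
  unfolding Bd_def by (metis distrib_right norm_triangle_le add_mono)

lemma Bd_IO:
  assumes B: "Bd H M e" and ed: "e d = 4/3" and t: "t \<ge> 0" and c: "cont H"
  shows "Bd (IO d k t H) (6 * M) (e(d:=0))"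
  unfolding Bd_def
proof
  fix p
  have M: "M \<ge> 0" using Bd_M_nonneg[OF B] .
  have "norm (IO d k t H p) \<le> integral {-t..t} (\<lambda>a. M * wp (e(d:=0)) p * w (4/3) a)"
    unfolding IO_def I1_def
  proof (rule integral_norm_bound_integral)
    show "(\<lambda>a. H (upd d a p) * EE k a) integrable_on {- t..t}" by (rule integrable_IO_line[OF c])
    show "(\<lambda>a. M * wp (e(d := 0)) p * w (4 / 3) a) integrable_on {- t..t}"
      by (intro integrable_continuous_interval continuous_intros)
    fix a
    have "norm (H (upd d a p) * EE k a) \<le> M * wp e (upd d a p)"
      using BdD[OF B, of "upd d a p"] by (simp add: norm_mult)
    then show "norm (H (upd d a p) * EE k a) \<le> M * wp (e(d := 0)) p * w (4 / 3) a"
      by (simp add: wp_upd ed mult_ac)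
  qed
  also have "\<dots> = M * wp (e(d:=0)) p * integral {-t..t} (w (4/3))"
    by simp
  also have "\<dots> \<le> M * wp (e(d:=0)) p * 6"
    by (intro mult_left_mono w_integral_sym t mult_nonneg_nonneg M less_imp_le[OF wp_pos])
  finally show "norm (IO d k t H p) \<le> 6 * M * wp (e(d := 0)) p" by (simp add: mult_ac)
qed

lemma Bd_PO:
  assumes B: "Bd H M e" and k: "k \<noteq> 0" and t: "t \<ge> 0"
  shows "Bd (PO d k t H) (2 * M / \<bar>k\<bar> * w (e d) t) (e(d:=0))"
  unfolding Bd_def
proof
  fix p
  have M: "M \<ge> 0" using Bd_M_nonneg[OF B] .
  have h: "norm (H (upd d a p)) \<le> M * w (e d) a * wp (e(d:=0)) p" for a
    using BdD[OF B, of "upd d a p"] by (simp add: wp_upd mult_ac)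
  have "norm (PO d k t H p) = norm (H (upd d t p) * EE k t - H (upd d (-t) p) * EE k (-t)) / \<bar>k\<bar>"
    unfolding PO_def P1_def by (simp add: norm_divide norm_mult)
  also have "\<dots> \<le> (norm (H (upd d t p)) + norm (H (upd d (-t) p))) / \<bar>k\<bar>"
    by (intro divide_right_mono) (auto intro: norm_triangle_le_diff simp: norm_mult)
  also have "\<dots> \<le> (M * w (e d) t * wp (e(d:=0)) p + M * w (e d) (-t) * wp (e(d:=0)) p) / \<bar>k\<bar>"
    by (intro divide_right_mono add_mono h) auto
  finally show "norm (PO d k t H p) \<le> 2 * M / \<bar>k\<bar> * w (e d) t * wp (e(d := 0)) p"
    by (simp add: field_simps)
qed

lemma IO_diff_split:
  assumes c: "cont H" and t: "0 \<le> t" "t \<le> t'"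
  shows "IO d k t' H p - IO d k t H p =
    integral {-t'..-t} (\<lambda>a. H (upd d a p) * EE k a) + integral {t..t'} (\<lambda>a. H (upd d a p) * EE k a)"
proof -
  let ?f = "\<lambda>a. H (upd d a p) * EE k a"
  have i: "?f integrable_on {-t'..t'}" by (rule integrable_IO_line[OF c])
  have i2: "?f integrable_on {-t..t'}"
    by (rule integrable_on_subinterval[OF i]) (use t in auto)
  have "integral {-t'..t'} ?f = integral {-t'..-t} ?f + integral {-t..t'} ?f"
    using Henstock_Kurzweil_Integration.integral_combine[OF _ _ i, of "-t"] t by auto
  moreover have "integral {-t..t'} ?f = integral {-t..t} ?f + integral {t..t'} ?f"
    using Henstock_Kurzweil_Integration.integral_combine[OF _ _ i2, of "t"] t by auto
  ultimately show ?thesis unfolding IO_def I1_def by simp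
qed

lemma Bd_IO_diff:
  assumes B: "Bd H M e" and ed: "e d = 4/3" and t: "0 \<le> t" "t \<le> t'" and c: "cont H"
  shows "Bd (\<lambda>p. IO d k t' H p - IO d k t H p) (6 * M * w (1/3) t) (e(d:=0))"
  unfolding Bd_def
proof
  fix p
  have M: "M \<ge> 0" using Bd_M_nonneg[OF B] .
  let ?f = "\<lambda>a. H (upd d a p) * EE k a"
  let ?g = "\<lambda>a. M * wp (e(d:=0)) p * w (4/3) a"
  have fi: "?f integrable_on {a..b}" for a b by (rule integrable_IO_line[OF c])
  have gi: "?g integrable_on {a..b}" for a b by (intro integrable_continuous_interval continuous_intros)
  have fb: "norm (?f a) \<le> ?g a" for a
  proof -
    have "norm (H (upd d a p) * EE k a) \<le> M * wp e (upd d a p)"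
      using BdD[OF B, of "upd d a p"] by (simp add: norm_mult)
    then show ?thesis by (simp add: wp_upd ed mult_ac)
  qed
  have "norm (IO d k t' H p - IO d k t H p) \<le> norm (integral {-t'..-t} ?f) + norm (integral {t..t'} ?f)"
    unfolding IO_diff_split[OF c t] by (rule norm_triangle_ineq)
  also have "\<dots> \<le> integral {-t'..-t} ?g + integral {t..t'} ?g"
    by (intro add_mono integral_norm_bound_integral fi gi fb)
  also have "\<dots> = M * wp (e(d:=0)) p * (integral {-t'..-t} (w (4/3)) + integral {t..t'} (w (4/3)))"
    by (simp add: algebra_simps)
  also have "\<dots> \<le> M * wp (e(d:=0)) p * (3 * w (1/3) t + 3 * w (1/3) t)"
    by (intro mult_left_mono add_mono w_integral_neg w_integral_pos t mult_nonneg_nonneg M less_imp_le[OF wp_pos])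
  finally show "norm (IO d k t' H p - IO d k t H p) \<le> 6 * M * w (1/3) t * wp (e(d := 0)) p"
    by (simp add: algebra_simps)
qed


section \<open>Limits with rates\<close>

lemma rate_limit3:
  fixes T :: "real \<Rightarrow> real \<Rightarrow> real \<Rightarrow> 'p \<Rightarrow> complex" and \<beta> :: "real \<Rightarrow> real"
  assumes \<beta>lim: "(\<beta> \<longlongrightarrow> 0) at_top"
    and C: "\<And>r s t r' s' t' p. 0 \<le> r \<Longrightarrow> r \<le> r' \<Longrightarrow> 0 \<le> s \<Longrightarrow> s \<le> s' \<Longrightarrow> 0 \<le> t \<Longrightarrow> t \<le> t' \<Longrightarrow>
       norm (T r' s' t' p - T r s t p) \<le> \<beta> r + \<beta> s + \<beta> t"
  shows "\<exists>\<Phi>. \<forall>p r s t. 0 \<le> r \<longrightarrow> 0 \<le> s \<longrightarrow> 0 \<le> t \<longrightarrow> norm (T r s t p - \<Phi> p) \<le> \<beta> r + \<beta> s + \<beta> t"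
proof -
  have conv: "convergent (\<lambda>n::nat. T (real n) (real n) (real n) p)" for p
  proof (rule Cauchy_convergent, unfold Cauchy_def, intro allI impI)
    fix e :: real assume e: "e > 0"
    have "\<forall>\<^sub>F u in at_top. \<beta> u < e / 3"
      using \<beta>lim e by (auto simp: tendsto_iff dist_norm elim!: allE[of _ "e/3"] eventually_mono)
    then obtain N where N: "\<And>u. u \<ge> N \<Longrightarrow> \<beta> u < e / 3"
      unfolding eventually_at_top_linorder by blast
    define M where "M = nat \<lceil>max N 0\<rceil>"
    have key: "norm (T (real n) (real n) (real n) p - T (real m) (real m) (real m) p) < e"
      if "M \<le> m" "m \<le> n" for m n
    proof -
      have "real m \<ge> N" using that unfolding M_def by linarith
      then have "\<beta> (real m) < e / 3" by (rule N)
      moreover have "norm (T (real n) (real n) (real n) p - T (real m) (real m) (real m) p)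
          \<le> \<beta> (real m) + \<beta> (real m) + \<beta> (real m)"
        by (rule C) (use that in auto)
      ultimately show ?thesis by linarith
    qed
    show "\<exists>M. \<forall>m\<ge>M. \<forall>n\<ge>M. dist (T (real m) (real m) (real m) p) (T (real n) (real n) (real n) p) < e"
    proof (intro exI allI impI)
      fix m n assume "M \<le> m" "M \<le> n"
      then show "dist (T (real m) (real m) (real m) p) (T (real n) (real n) (real n) p) < e"
        using key[of m n] key[of n m] by (cases "m \<le> n") (auto simp: dist_norm norm_minus_commute)
    qed
  qed
  define \<Phi> where "\<Phi> p = lim (\<lambda>n::nat. T (real n) (real n) (real n) p)" for p
  have lim: "(\<lambda>n::nat. T (real n) (real n) (real n) p) \<longlonglongrightarrow> \<Phi> p" for p
    unfolding \<Phi>_def using conv convergent_LIMSEQ_iff by blast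
  show ?thesis
  proof (intro exI allI impI)
    fix r s t :: real
    fix p
    assume rst: "0 \<le> r" "0 \<le> s" "0 \<le> t"
    have "((\<lambda>n::nat. T r s t p - T (real n) (real n) (real n) p) \<longlongrightarrow> T r s t p - \<Phi> p) sequentially"
      by (intro tendsto_intros lim)
    moreover have "\<forall>\<^sub>F n in sequentially. norm (T r s t p - T (real n) (real n) (real n) p) \<le> \<beta> r + \<beta> s + \<beta> t"
    proof -
      have "\<forall>\<^sub>F n in sequentially. real n \<ge> max r (max s t)"
        using eventually_ge_at_top[of "nat \<lceil>max r (max s t)\<rceil>"]
        by eventually_elim (use real_nat_ceiling_ge[of "max r (max s t)"] in linarith)
      then show ?thesis
        by eventually_elim (subst norm_minus_commute, rule C, use rst in auto)
    qed
    ultimately show "norm (T r s t p - \<Phi> p) \<le> \<beta> r + \<beta> s + \<beta> t"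
      by (rule Lim_norm_ubound[rotated]) simp
  qed
qed


lemma tendsto_rate1:
  fixes \<beta> :: "real \<Rightarrow> real" and T :: "real \<Rightarrow> complex"
  assumes "(\<beta> \<longlongrightarrow> 0) at_top" and "\<And>t. t \<ge> 0 \<Longrightarrow> norm (T t - L) \<le> \<beta> t"
  shows "(T \<longlongrightarrow> (L::complex)) at_top"
proof (rule LIM_zero_cancel, rule Lim_null_comparison[OF _ assms(1)])
  show "\<forall>\<^sub>F x in at_top. norm (T x - L) \<le> \<beta> x"
    using eventually_ge_at_top[of "0::real"] by eventually_elim (rule assms(2))
qed

lemma tendsto_rate2:
  fixes \<beta> :: "real \<Rightarrow> real" and T :: "real \<Rightarrow> real \<Rightarrow> complex"
  assumes b: "(\<beta> \<longlongrightarrow> 0) at_top" and B: "\<And>r s. r \<ge> 0 \<Longrightarrow> s \<ge> 0 \<Longrightarrow> norm (T r s - L) \<le> \<beta> r + \<beta> s"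
  shows "((\<lambda>(r, s). T r s) \<longlongrightarrow> (L::complex)) (at_top \<times>\<^sub>F at_top)"
proof -
  let ?F = "at_top \<times>\<^sub>F at_top :: (real \<times> real) filter"
  have f1: "filterlim (\<lambda>x. fst x) at_top ?F" by (rule filterlim_fst)
  have f2: "filterlim (\<lambda>x. snd x) at_top ?F" by (rule filterlim_snd)
  have lim: "((\<lambda>x. \<beta> (fst x) + \<beta> (snd x)) \<longlongrightarrow> 0 + 0) ?F"
    by (intro tendsto_add filterlim_compose[OF b f1] filterlim_compose[OF b f2])
  have ev: "\<forall>\<^sub>F x in ?F. norm ((\<lambda>(r, s). T r s) x - L) \<le> \<beta> (fst x) + \<beta> (snd x)"
  proof -
    have "\<forall>\<^sub>F x in ?F. 0 \<le> fst x" "\<forall>\<^sub>F x in ?F. 0 \<le> snd x"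
      using f1 f2 unfolding filterlim_at_top by blast+
    then show ?thesis by eventually_elim (simp add: case_prod_unfold B)
  qed
  show ?thesis
    by (rule LIM_zero_cancel, rule Lim_null_comparison[OF ev]) (use lim in simp)
qed

lemma tendsto_rate3:
  fixes \<beta> :: "real \<Rightarrow> real" and T :: "real \<Rightarrow> real \<Rightarrow> real \<Rightarrow> complex"
  assumes b: "(\<beta> \<longlongrightarrow> 0) at_top"
    and B: "\<And>r s t. r \<ge> 0 \<Longrightarrow> s \<ge> 0 \<Longrightarrow> t \<ge> 0 \<Longrightarrow> norm (T r s t - L) \<le> \<beta> r + \<beta> s + \<beta> t"
  shows "((\<lambda>(r, s, t). T r s t) \<longlongrightarrow> (L::complex)) (at_top \<times>\<^sub>F (at_top \<times>\<^sub>F at_top))"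
proof -
  let ?F = "at_top \<times>\<^sub>F (at_top \<times>\<^sub>F at_top) :: (real \<times> real \<times> real) filter"
  have f1: "filterlim (\<lambda>x. fst x) at_top ?F" by (rule filterlim_fst)
  have f2: "filterlim (\<lambda>x. fst (snd x)) at_top ?F" by (rule filterlim_compose[OF filterlim_fst filterlim_snd])
  have f3: "filterlim (\<lambda>x. snd (snd x)) at_top ?F" by (rule filterlim_compose[OF filterlim_snd filterlim_snd])
  have lim: "((\<lambda>x. \<beta> (fst x) + \<beta> (fst (snd x)) + \<beta> (snd (snd x))) \<longlongrightarrow> 0 + 0 + 0) ?F"
    by (intro tendsto_add filterlim_compose[OF b f1] filterlim_compose[OF b f2] filterlim_compose[OF b f3])
  have ev: "\<forall>\<^sub>F x in ?F. norm ((\<lambda>(r, s, t). T r s t) x - L) \<le> \<beta> (fst x) + \<beta> (fst (snd x)) + \<beta> (snd (snd x))"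
  proof -
    have "\<forall>\<^sub>F x in ?F. 0 \<le> fst x" "\<forall>\<^sub>F x in ?F. 0 \<le> fst (snd x)" "\<forall>\<^sub>F x in ?F. 0 \<le> snd (snd x)"
      using f1 f2 f3 unfolding filterlim_at_top by blast+
    then show ?thesis by eventually_elim (simp add: case_prod_unfold B)
  qed
  show ?thesis
    by (rule LIM_zero_cancel, rule Lim_null_comparison[OF ev]) (use lim in simp)
qed

lemma le_limit_arg:
  fixes x a t0 :: real and g :: "real \<Rightarrow> real"
  assumes g: "(g \<longlongrightarrow> 0) at_top" and le: "\<And>t. t \<ge> t0 \<Longrightarrow> x \<le> a + g t"
  shows "x \<le> a"
proof -
  have "((\<lambda>t. a + g t) \<longlongrightarrow> a + 0) at_top" by (intro tendsto_intros g)
  moreover have "\<forall>\<^sub>F t in at_top. x \<le> a + g t"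
    using eventually_ge_at_top[of t0] by eventually_elim (rule le)
  ultimately show ?thesis
    using tendsto_le[of at_top "\<lambda>t. a + g t" "a + 0" "\<lambda>_. x" x] by simp
qed

lemma w13_lim: "((\<lambda>u. K * w (1/3) u) \<longlongrightarrow> 0) at_top"
proof -
  have "filterlim (\<lambda>u::real. 1 + \<bar>u\<bar>) at_top at_top"
    unfolding filterlim_at_top
  proof (intro allI)
    fix Z :: real
    show "\<forall>\<^sub>F x in at_top. Z \<le> 1 + \<bar>x\<bar>"
      using eventually_ge_at_top[of Z] by eventually_elim auto
  qed
  then have "((\<lambda>u::real. (1 + \<bar>u\<bar>) powr (- (1/3))) \<longlongrightarrow> 0) at_top"
    by (intro tendsto_neg_powr) auto
  then have "((\<lambda>u::real. K * (1 + \<bar>u\<bar>) powr (- (1/3))) \<longlongrightarrow> K * 0) at_top"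
    by (intro tendsto_intros)
  then show ?thesis unfolding w_def mult_zero_right .
qed

definition lift :: "(real \<Rightarrow> real \<Rightarrow> real \<Rightarrow> real) \<Rightarrow> p3 \<Rightarrow> complex" where
  "lift g = (\<lambda>q. complex_of_real (g (crd DX q) (crd DY q) (crd DZ q)))"

lemma lift_upd:
  "lift g (upd DX a q) = complex_of_real (g a (crd DY q) (crd DZ q))"
  "lift g (upd DY a q) = complex_of_real (g (crd DX q) a (crd DZ q))"
  "lift g (upd DZ a q) = complex_of_real (g (crd DX q) (crd DY q) a)"
  by (simp_all add: lift_def)

lemma HD_lift:
  assumes "\<And>x y z. (\<lambda>t. g t y z) field_differentiable (at x) \<and> (\<lambda>t. g x t z) field_differentiable (at y)
     \<and> (\<lambda>t. g x y t) field_differentiable (at z)"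
  shows "HD d (lift g) (lift (pd3 d g))"
  unfolding HD_def
proof (intro allI)
  fix q a
  show "((\<lambda>b. lift g (upd d b q)) has_vector_derivative lift (pd3 d g) (upd d a q)) (at a)"
  proof (cases d)
    case DX
    have "((\<lambda>t. g t (crd DY q) (crd DZ q)) has_real_derivative deriv (\<lambda>t. g t (crd DY q) (crd DZ q)) a) (at a)"
      using assms DERIV_deriv_iff_field_differentiable by blast
    from has_vector_derivative_of_real[OF this] show ?thesis using DX by (simp add: lift_def)
  next
    case DY
    have "((\<lambda>t. g (crd DX q) t (crd DZ q)) has_real_derivative deriv (\<lambda>t. g (crd DX q) t (crd DZ q)) a) (at a)"
      using assms DERIV_deriv_iff_field_differentiable by blast
    from has_vector_derivative_of_real[OF this] show ?thesis using DY by (simp add: lift_def)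
  next
    case DZ
    have "((\<lambda>t. g (crd DX q) (crd DY q) t) has_real_derivative deriv (\<lambda>t. g (crd DX q) (crd DY q) t) a) (at a)"
      using assms DERIV_deriv_iff_field_differentiable by blast
    from has_vector_derivative_of_real[OF this] show ?thesis using DZ by (simp add: lift_def)
  qed
qed

lemma cont_lift:
  assumes "continuous_on UNIV (\<lambda>p. g (fst p) (fst (snd p)) (snd (snd p)))"
  shows "cont (lift g)"
proof -
  have "lift g = (\<lambda>p. complex_of_real (g (fst p) (fst (snd p)) (snd (snd p))))"
    by (simp add: lift_def fun_eq_iff)
  then show ?thesis using assms by (auto intro!: continuous_intros)
qed

lemma abs_crd_le: "\<bar>crd d q\<bar> \<le> norm q"
proof -
  obtain x y z where q: "q = (x, y, z)" by (cases q) auto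
  have 1: "\<bar>x\<bar> \<le> norm (x, y, z)" using norm_fst_le[of x "(y, z)"] by simp
  have 0: "norm (y, z) \<le> norm (x, y, z)" by (rule norm_snd_le)
  have 2: "\<bar>y\<bar> \<le> norm (x, y, z)"
    using norm_fst_le[of y z] 0 by simp
  have 3: "\<bar>z\<bar> \<le> norm (x, y, z)"
    using norm_snd_le[of z y] norm_snd_le[of y z] 0 by simp
  show ?thesis using 1 2 3 unfolding q by (cases d) auto
qed

lemma wp_lower:
  assumes e: "\<And>d. e d \<ge> 0" and n: "e DX + e DY + e DZ = real n" and R: "R \<ge> 1 + norm q"
  shows "wp e q \<ge> R powr (- real n)"
proof -
  have R0: "R > 0" using R norm_ge_zero[of q] by linarith
  have h: "w (e d) (crd d q) \<ge> R powr (- e d)" for d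
    unfolding w_def
    by (rule powr_mono2') (use e abs_crd_le[of d q] R in auto)
  have "w (e DX) (crd DX q) \<ge> R powr (- e DX)" "w (e DY) (crd DY q) \<ge> R powr (- e DY)"
    "w (e DZ) (crd DZ q) \<ge> R powr (- e DZ)" by (rule h)+
  then have "wp e q \<ge> R powr (- e DX) * R powr (- e DY) * R powr (- e DZ)"
    unfolding wp_def by (intro mult_mono) (auto intro: mult_nonneg_nonneg w_nonneg simp del: crd.simps)
  also have "R powr (- e DX) * R powr (- e DY) * R powr (- e DZ) = R powr (- real n)"
  proof -
    have "R powr (- e DX) * R powr (- e DY) * R powr (- e DZ) = R powr (- e DX + - e DY + - e DZ)"
      by (simp add: powr_add[symmetric])
    also have "- e DX + - e DY + - e DZ = - real n" using n by simp
    finally show ?thesis .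
  qed
  finally show ?thesis .
qed

lemma weight_bound:
  fixes g :: "real \<Rightarrow> real \<Rightarrow> real \<Rightarrow> real"
  assumes c: "cont (lift g)"
    and dec: "\<And>x y z. norm (x, y, z) > 1 \<Longrightarrow> \<bar>g x y z\<bar> \<le> C / norm (x, y, z) ^ n"
    and e: "\<And>d. e d \<ge> 0" and n: "e DX + e DY + e DZ = real n"
  shows "\<exists>M. Bd (lift g) M e"
proof -
  have "compact (lift g ` cball 0 1)"
    by (rule compact_continuous_image[OF continuous_on_subset[OF c]]) auto
  then obtain B where B: "\<And>q. q \<in> cball 0 1 \<Longrightarrow> norm (lift g q) \<le> B"
    using compact_imp_bounded bounded_iff by (metis image_eqI)
  define M where "M = (max B 0 + max C 0) * 2 ^ n"
  have "Bd (lift g) M e"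
    unfolding Bd_def
  proof
    fix q :: p3
    show "norm (lift g q) \<le> M * wp e q"
    proof (cases "norm q \<le> 1")
      case True
      have "wp e q \<ge> 2 powr (- real n)"
        by (rule wp_lower[OF e n]) (use True in auto)
      then have "M * wp e q \<ge> M * 2 powr (- real n)"
        by (intro mult_left_mono) (auto simp: M_def)
      moreover have "M * 2 powr (- real n) = max B 0 + max C 0"
        unfolding M_def by (simp add: powr_minus powr_realpow)
      moreover have "norm (lift g q) \<le> B" using B True by auto
      ultimately show ?thesis by linarith
    next
      case False
      define R where "R = 2 * norm q"
      have R1: "R \<ge> 1 + norm q" using False unfolding R_def by simp
      have "wp e q \<ge> R powr (- real n)" by (rule wp_lower[OF e n R1])
      then have "M * wp e q \<ge> M * R powr (- real n)"
        by (intro mult_left_mono) (auto simp: M_def)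
      moreover have "M * R powr (- real n) = (max B 0 + max C 0) / norm q ^ n"
      proof -
        have "R powr real n = R ^ n" by (rule powr_realpow) (use False in \<open>auto simp: R_def\<close>)
        moreover have q0: "q \<noteq> 0" by (metis False norm_zero zero_le_one)
        moreover have "norm q ^ n > 0" using q0 by (intro zero_less_power) simp
        ultimately show ?thesis
          using False unfolding M_def R_def by (simp add: powr_minus power_mult_distrib field_simps)
      qed
      moreover have "norm (lift g q) \<le> C / norm q ^ n"
      proof -
        obtain x y z where q: "q = (x, y, z)" by (cases q) auto
        show ?thesis using dec[of x y z] False unfolding q by (simp add: lift_def)
      qed
      moreover have "C / norm q ^ n \<le> (max B 0 + max C 0) / norm q ^ n"
        by (intro divide_right_mono) auto
      ultimately show ?thesis by linarith
    qed
  qed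
  then show ?thesis by blast
qed

definition e3 :: "dir3 set \<Rightarrow> dir3 \<Rightarrow> real" where
  "e3 D d = (if d \<in> D then 4/3 else 1/3)"

lemma e3_simps [simp]: "d \<in> D \<Longrightarrow> e3 D d = 4/3" "d \<notin> D \<Longrightarrow> e3 D d = 1/3"
  by (simp_all add: e3_def)

lemma e3_nonneg: "0 \<le> e3 D d" by (simp add: e3_def)

lemma fun_upd_nonneg: "(\<And>d. 0 \<le> e d) \<Longrightarrow> 0 \<le> c \<Longrightarrow> 0 \<le> (e(d0 := c)) d"
  by simp

lemma conv1:
  assumes k: "k \<noteq> 0" and c: "cont H" "cont H'" and hd: "HD d H H'"
    and B: "Bd H M (e3 {})" "Bd H' M (e3 {d})"
  shows "\<exists>\<Phi> K. \<forall>t p. t \<ge> 0 \<longrightarrow> norm (IO d k t H p - \<Phi> p) \<le> K * w (1/3) t"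
proof -
  define c where "c = 1 / (\<i> * of_real k)"
  have M: "M \<ge> 0" using Bd_M_nonneg[OF B(1)] .
  have eq: "IO d k t H p = PO d k t H p + c * IO d k t H' p" if "t \<ge> 0" for t p
    using IBP_IO[OF hd c(2) that k] unfolding c_def by simp
  have P: "norm (PO d k t H p) \<le> 2 * M / \<bar>k\<bar> * w (1/3) t" if "t \<ge> 0" for t p
    using Bd_final[OF Bd_PO[OF B(1) k that, of d]] e3_nonneg by (simp add: e3_def)
  have D: "norm (IO d k t' H' p - IO d k t H' p) \<le> 6 * M * w (1/3) t" if "0 \<le> t" "t \<le> t'" for t t' p
    using Bd_final[OF Bd_IO_diff[OF B(2) _ that c(2), where k=k]] e3_nonneg by (simp add: e3_def)
  define K0 where "K0 = 4 * M / \<bar>k\<bar> + norm c * (6 * M)"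
  have K0: "K0 \<ge> 0" unfolding K0_def using M by simp
  have cauchy: "norm (IO d k t' H p - IO d k t H p) \<le> K0 * w (1/3) t" if "0 \<le> t" "t \<le> t'" for t t' p
  proof -
    have "IO d k t' H p - IO d k t H p = PO d k t' H p - PO d k t H p + c * (IO d k t' H' p - IO d k t H' p)"
      using eq[of t p] eq[of t' p] that by (simp add: algebra_simps)
    also have "norm \<dots> \<le> norm (PO d k t' H p) + norm (PO d k t H p) + norm c * norm (IO d k t' H' p - IO d k t H' p)"
      by (metis norm_triangle_le norm_triangle_ineq4 add_mono order_refl norm_mult)
    also have "\<dots> \<le> 2 * M / \<bar>k\<bar> * w (1/3) t' + 2 * M / \<bar>k\<bar> * w (1/3) t + norm c * (6 * M * w (1/3) t)"
      by (intro add_mono P mult_left_mono D) (use that in auto)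
    also have "\<dots> \<le> 2 * M / \<bar>k\<bar> * w (1/3) t + 2 * M / \<bar>k\<bar> * w (1/3) t + norm c * (6 * M * w (1/3) t)"
      by (intro add_mono mult_left_mono w_mono) (use that M in auto)
    also have "\<dots> = K0 * w (1/3) t" unfolding K0_def by (simp add: algebra_simps)
    finally show ?thesis .
  qed
  have "\<exists>\<Phi>. \<forall>p (r::real) (s::real) (t::real). 0 \<le> r \<longrightarrow> 0 \<le> s \<longrightarrow> 0 \<le> t \<longrightarrow>
      norm ((\<lambda>(r::real) (s::real) t p. IO d k t H p) r s t p - \<Phi> p) \<le> K0 * w (1/3) r + K0 * w (1/3) s + K0 * w (1/3) t"
  proof (rule rate_limit3[OF w13_lim])
    fix r s t r' s' t' :: real and p assume h: "0 \<le> r" "r \<le> r'" "0 \<le> s" "s \<le> s'" "0 \<le> (t::real)" "t \<le> t'"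
    have "norm (IO d k t' H p - IO d k t H p) \<le> K0 * w (1/3) t" by (rule cauchy) (use h in auto)
    moreover have "0 \<le> K0 * w (1/3) r" "0 \<le> K0 * w (1/3) s" using K0 w_nonneg by auto
    ultimately show "norm ((\<lambda>(r::real) (s::real) t p. IO d k t H p) r' s' t' p - (\<lambda>(r::real) (s::real) t p. IO d k t H p) r s t p)
        \<le> K0 * w (1/3) r + K0 * w (1/3) s + K0 * w (1/3) t" by simp
  qed
  then obtain \<Phi> where \<Phi>: "\<And>p (r::real) (s::real) (t::real). 0 \<le> r \<Longrightarrow> 0 \<le> s \<Longrightarrow> 0 \<le> t \<Longrightarrow>
      norm (IO d k t H p - \<Phi> p) \<le> K0 * w (1/3) r + K0 * w (1/3) s + K0 * w (1/3) t" by blast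
  show ?thesis
  proof (intro exI[of _ \<Phi>] exI[of _ "3 * K0"] allI impI)
    fix t :: real and p assume "t \<ge> 0"
    then show "norm (IO d k t H p - \<Phi> p) \<le> 3 * K0 * w (1/3) t"
      using \<Phi>[of t t t p] by (simp add: algebra_simps)
  qed
qed


lemma expand2:
  assumes dd: "d1 \<noteq> d2" and k: "k1 \<noteq> 0" "k2 \<noteq> 0" and st: "s \<ge> 0" "t \<ge> 0"
    and c: "cont H" "cont H1" "cont H2" "cont H12"
    and hd: "HD d1 H H1" "HD d2 H H2" "HD d2 H1 H12"
  shows "IO d1 k1 s (IO d2 k2 t H) = (\<lambda>p. PO d1 k1 s (PO d2 k2 t H) p
      + (1 / (\<i> * of_real k2)) * PO d1 k1 s (IO d2 k2 t H2) p
      + (1 / (\<i> * of_real k1)) * IO d1 k1 s (PO d2 k2 t H1) p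
      + (1 / (\<i> * of_real k1)) * (1 / (\<i> * of_real k2)) * IO d1 k1 s (IO d2 k2 t H12) p)"
proof -
  define c1 where "c1 = 1 / (\<i> * of_real k1)"
  define c2 where "c2 = 1 / (\<i> * of_real k2)"
  have hd1: "HD d1 (IO d2 k2 t H) (IO d2 k2 t H1)"
    by (rule HD_IO) (use dd hd c in auto)
  have e1: "IO d1 k1 s (IO d2 k2 t H) = (\<lambda>p. PO d1 k1 s (IO d2 k2 t H) p + c1 * IO d1 k1 s (IO d2 k2 t H1) p)"
    unfolding c1_def by (rule IBP_IO[OF hd1 cont_IO[OF c(2)] st(1) k(1)])
  have e2: "IO d2 k2 t H = (\<lambda>p. PO d2 k2 t H p + c2 * IO d2 k2 t H2 p)"
    unfolding c2_def by (rule IBP_IO[OF hd(2) c(3) st(2) k(2)])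
  have e3: "IO d2 k2 t H1 = (\<lambda>p. PO d2 k2 t H1 p + c2 * IO d2 k2 t H12 p)"
    unfolding c2_def by (rule IBP_IO[OF hd(3) c(4) st(2) k(2)])
  have f2: "PO d1 k1 s (IO d2 k2 t H) = (\<lambda>p. PO d1 k1 s (PO d2 k2 t H) p + c2 * PO d1 k1 s (IO d2 k2 t H2) p)"
    by (subst e2) (simp add: PO_add PO_cmult)
  have f3: "IO d1 k1 s (IO d2 k2 t H1) = (\<lambda>p. IO d1 k1 s (PO d2 k2 t H1) p + c2 * IO d1 k1 s (IO d2 k2 t H12) p)"
  proof -
    have "IO d1 k1 s (IO d2 k2 t H1) = IO d1 k1 s (\<lambda>p. PO d2 k2 t H1 p + c2 * IO d2 k2 t H12 p)"
      by (subst e3) simp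
    also have "\<dots> = (\<lambda>p. IO d1 k1 s (PO d2 k2 t H1) p + IO d1 k1 s (\<lambda>p. c2 * IO d2 k2 t H12 p) p)"
      by (rule IO_add) (intro continuous_intros c)+
    also have "\<dots> = (\<lambda>p. IO d1 k1 s (PO d2 k2 t H1) p + c2 * IO d1 k1 s (IO d2 k2 t H12) p)"
      by (simp add: IO_cmult)
    finally show ?thesis .
  qed
  show ?thesis
    unfolding e1 f2 f3 c1_def[symmetric] c2_def[symmetric]
    by (simp add: algebra_simps)
qed


lemma Bd_PO_le:
  assumes "Bd H M e" "k \<noteq> 0" "t \<ge> 0" "e d \<ge> 0"
  shows "Bd (PO d k t H) (2 * M / \<bar>k\<bar>) (e(d:=0))"
proof (rule Bd_mono[OF Bd_PO[OF assms(1-3)]])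
  have "M \<ge> 0" using Bd_M_nonneg[OF assms(1)] .
  then have "2 * M / \<bar>k\<bar> * w (e d) t \<le> 2 * M / \<bar>k\<bar> * 1"
    by (intro mult_left_mono w_le1 assms(4)) auto
  then show "2 * M / \<bar>k\<bar> * w (e d) t \<le> 2 * M / \<bar>k\<bar>" by simp
qed

lemma Bd_PO_w:
  assumes "Bd H M e" "k \<noteq> 0" "t \<ge> 0" "e d = 1/3"
  shows "Bd (PO d k t H) (2 * M / \<bar>k\<bar> * w (1/3) t) (e(d:=0))"
  using Bd_PO[OF assms(1-3), of d] assms(4) by simp

lemma Bd_final':
  assumes "Bd H M e" "\<forall>d. e d \<ge> 0" shows "norm (H p) \<le> M"
  using Bd_final[OF assms(1)] assms(2) by blast

lemma conv2:
  assumes dd: "d1 \<noteq> d2" and k: "k1 \<noteq> 0" "k2 \<noteq> 0"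
    and c: "cont H" "cont H1" "cont H2" "cont H12"
    and hd: "HD d1 H H1" "HD d2 H H2" "HD d2 H1 H12"
    and B: "Bd H M (e3 {})" "Bd H1 M (e3 {d1})" "Bd H2 M (e3 {d2})" "Bd H12 M (e3 {d1, d2})"
  shows "\<exists>\<Phi> K. \<forall>s t p. s \<ge> 0 \<longrightarrow> t \<ge> 0 \<longrightarrow>
     norm (IO d1 k1 s (IO d2 k2 t H) p - \<Phi> p) \<le> K * w (1/3) s + K * w (1/3) t"
proof -
  define c1 where "c1 = 1 / (\<i> * of_real k1)"
  define c2 where "c2 = 1 / (\<i> * of_real k2)"
  have M: "M \<ge> 0" using Bd_M_nonneg[OF B(1)] .
  have dd': "d2 \<noteq> d1" using dd by auto
  define Rm where "Rm s t p = PO d1 k1 s (PO d2 k2 t H) p + c2 * PO d1 k1 s (IO d2 k2 t H2) p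
      + c1 * IO d1 k1 s (PO d2 k2 t H1) p" for s t p
  define Mn where "Mn s t p = IO d1 k1 s (IO d2 k2 t H12) p" for s t p
  have eq: "IO d1 k1 s (IO d2 k2 t H) p = Rm s t p + c1 * c2 * Mn s t p" if "s \<ge> 0" "t \<ge> 0" for s t p
    unfolding Rm_def Mn_def c1_def c2_def
    by (subst expand2[OF dd k that c hd]) simp
  define Ka where "Ka = 2 * (2 * M / \<bar>k2\<bar>) / \<bar>k1\<bar>"
  define Kb where "Kb = 2 * (6 * M) / \<bar>k1\<bar>"
  define Kc where "Kc = 6 * (2 * M / \<bar>k2\<bar>)"
  have ta: "norm (PO d1 k1 s (PO d2 k2 t H) p) \<le> Ka * w (1/3) s" if "s \<ge> 0" "t \<ge> 0" for s t p
  proof -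
    have "Bd (PO d2 k2 t H) (2 * M / \<bar>k2\<bar>) ((e3 {})(d2 := 0))"
      by (rule Bd_PO_le[OF B(1) k(2) that(2)]) (simp add: e3_def)
    from Bd_PO_w[OF this k(1) that(1), of d1]
    have "Bd (PO d1 k1 s (PO d2 k2 t H)) (Ka * w (1/3) s) ((e3 {})(d2 := 0, d1 := 0))"
      using dd by (simp add: Ka_def)
    then show ?thesis by (rule Bd_final') (simp add: e3_def)
  qed
  have tb: "norm (PO d1 k1 s (IO d2 k2 t H2) p) \<le> Kb * w (1/3) s" if "s \<ge> 0" "t \<ge> 0" for s t p
  proof -
    have "Bd (IO d2 k2 t H2) (6 * M) ((e3 {d2})(d2 := 0))"
      by (rule Bd_IO[OF B(3) _ that(2) c(3)]) simp
    from Bd_PO_w[OF this k(1) that(1), of d1]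
    have "Bd (PO d1 k1 s (IO d2 k2 t H2)) (Kb * w (1/3) s) ((e3 {d2})(d2 := 0, d1 := 0))"
      using dd by (simp add: Kb_def)
    then show ?thesis by (rule Bd_final') (simp add: e3_def)
  qed
  have tc: "norm (IO d1 k1 s (PO d2 k2 t H1) p) \<le> Kc * w (1/3) t" if "s \<ge> 0" "t \<ge> 0" for s t p
  proof -
    have "Bd (PO d2 k2 t H1) (2 * M / \<bar>k2\<bar> * w (1/3) t) ((e3 {d1})(d2 := 0))"
      by (rule Bd_PO_w[OF B(2) k(2) that(2)]) (use dd in simp)
    from Bd_IO[OF this _ that(1) cont_PO[OF c(2)], of d1]
    have "Bd (IO d1 k1 s (PO d2 k2 t H1)) (Kc * w (1/3) t) ((e3 {d1})(d2 := 0, d1 := 0))"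
      using dd by (simp add: Kc_def mult_ac)
    then show ?thesis by (rule Bd_final') (simp add: e3_def)
  qed
  define KR where "KR = Ka + norm c2 * Kb + norm c1 * Kc"
  have KR: "KR \<ge> 0" unfolding KR_def Ka_def Kb_def Kc_def using M by simp
  have rm: "norm (Rm s t p) \<le> KR * w (1/3) s + KR * w (1/3) t" if "s \<ge> 0" "t \<ge> 0" for s t p
  proof -
    have "norm (Rm s t p) \<le> norm (PO d1 k1 s (PO d2 k2 t H) p) + norm c2 * norm (PO d1 k1 s (IO d2 k2 t H2) p)
        + norm c1 * norm (IO d1 k1 s (PO d2 k2 t H1) p)"
      unfolding Rm_def by (metis norm_triangle_le add_mono order_refl norm_mult)
    also have "\<dots> \<le> Ka * w (1/3) s + norm c2 * (Kb * w (1/3) s) + norm c1 * (Kc * w (1/3) t)"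
      by (intro add_mono mult_left_mono ta tb tc that) auto
    also have "\<dots> \<le> KR * w (1/3) s + KR * w (1/3) t"
    proof -
      have "Ka * w (1/3) s + norm c2 * (Kb * w (1/3) s) = (Ka + norm c2 * Kb) * w (1/3) s"
        by (simp add: algebra_simps)
      also have "\<dots> \<le> KR * w (1/3) s"
        by (intro mult_right_mono w_nonneg) (auto simp: KR_def Kc_def M)
      finally have 1: "Ka * w (1/3) s + norm c2 * (Kb * w (1/3) s) \<le> KR * w (1/3) s" .
      have "norm c1 * (Kc * w (1/3) t) \<le> KR * w (1/3) t"
        unfolding mult.assoc[symmetric]
        by (intro mult_right_mono w_nonneg) (auto simp: KR_def Ka_def Kb_def M)
      with 1 show ?thesis by linarith
    qed
    finally show ?thesis .
  qed
  define KM where "KM = 36 * M"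
  have mn: "norm (Mn s' t' p - Mn s t p) \<le> KM * w (1/3) s + KM * w (1/3) t"
    if "0 \<le> s" "s \<le> s'" "0 \<le> t" "t \<le> t'" for s s' t t' p
  proof -
    have b0: "Bd (IO d2 k2 t' H12) (6 * M) ((e3 {d1, d2})(d2 := 0))"
      by (rule Bd_IO[OF B(4) _ _ c(4)]) (use that in auto)
    have "Bd (\<lambda>p. IO d1 k1 s' (IO d2 k2 t' H12) p - IO d1 k1 s (IO d2 k2 t' H12) p)
        (6 * (6 * M) * w (1/3) s) ((e3 {d1, d2})(d2 := 0, d1 := 0))"
      by (rule Bd_IO_diff[OF b0 _ that(1,2) cont_IO[OF c(4)]]) (use dd in simp)
    then have "norm (IO d1 k1 s' (IO d2 k2 t' H12) p - IO d1 k1 s (IO d2 k2 t' H12) p) \<le> 6 * (6 * M) * w (1/3) s"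
      by (rule Bd_final') (simp add: e3_def)
    then have n1: "norm (Mn s' t' p - Mn s t' p) \<le> KM * w (1/3) s"
      unfolding Mn_def KM_def by simp
    have b1: "Bd (\<lambda>p. IO d2 k2 t' H12 p - IO d2 k2 t H12 p) (6 * M * w (1/3) t) ((e3 {d1, d2})(d2 := 0))"
      by (rule Bd_IO_diff[OF B(4) _ that(3,4) c(4)]) simp
    have "Bd (IO d1 k1 s (\<lambda>p. IO d2 k2 t' H12 p - IO d2 k2 t H12 p)) (6 * (6 * M * w (1/3) t))
        ((e3 {d1, d2})(d2 := 0, d1 := 0))"
      by (rule Bd_IO[OF b1 _ that(1)]) (use dd in \<open>auto intro!: continuous_intros c\<close>)
    moreover have "IO d1 k1 s (\<lambda>p. IO d2 k2 t' H12 p - IO d2 k2 t H12 p) p = Mn s t' p - Mn s t p"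
      unfolding Mn_def by (subst IO_diff) (auto intro!: continuous_intros c)
    ultimately have n2: "norm (Mn s t' p - Mn s t p) \<le> KM * w (1/3) t"
      using Bd_final'[of "IO d1 k1 s (\<lambda>p. IO d2 k2 t' H12 p - IO d2 k2 t H12 p)" _ _ p]
      unfolding KM_def by (simp add: e3_def mult_ac)
    have "norm (Mn s' t' p - Mn s t p) \<le> norm (Mn s' t' p - Mn s t' p) + norm (Mn s t' p - Mn s t p)"
      by (rule norm_diff_triangle_le[of _ "Mn s t' p"]) simp_all
    with n1 n2 show ?thesis by linarith
  qed
  define K0 where "K0 = 2 * KR + norm (c1 * c2) * KM"
  have K0: "K0 \<ge> 0" unfolding K0_def KM_def using KR M by simp
  have cauchy: "norm (IO d1 k1 s' (IO d2 k2 t' H) p - IO d1 k1 s (IO d2 k2 t H) p) \<le> K0 * w (1/3) s + K0 * w (1/3) t"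
    if h: "0 \<le> s" "s \<le> s'" "0 \<le> t" "t \<le> t'" for s s' t t' p
  proof -
    have "IO d1 k1 s' (IO d2 k2 t' H) p - IO d1 k1 s (IO d2 k2 t H) p
        = Rm s' t' p - Rm s t p + c1 * c2 * (Mn s' t' p - Mn s t p)"
      using eq[of s' t' p] eq[of s t p] h by (simp add: algebra_simps)
    also have "norm \<dots> \<le> norm (Rm s' t' p) + norm (Rm s t p) + norm (c1 * c2) * norm (Mn s' t' p - Mn s t p)"
      by (metis norm_triangle_le norm_triangle_ineq4 add_mono order_refl norm_mult)
    also have "\<dots> \<le> (KR * w (1/3) s' + KR * w (1/3) t') + (KR * w (1/3) s + KR * w (1/3) t)
        + norm (c1 * c2) * (KM * w (1/3) s + KM * w (1/3) t)"
      by (intro add_mono rm mult_left_mono mn) (use h in auto)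
    also have "\<dots> \<le> (KR * w (1/3) s + KR * w (1/3) t) + (KR * w (1/3) s + KR * w (1/3) t)
        + norm (c1 * c2) * (KM * w (1/3) s + KM * w (1/3) t)"
      by (intro add_mono mult_left_mono w_mono order_refl) (use h KR in auto)
    also have "\<dots> = K0 * w (1/3) s + K0 * w (1/3) t" unfolding K0_def by (simp add: algebra_simps)
    finally show ?thesis .
  qed
  have "\<exists>\<Phi>. \<forall>p (r::real) (s::real) (t::real). 0 \<le> r \<longrightarrow> 0 \<le> s \<longrightarrow> 0 \<le> t \<longrightarrow>
      norm ((\<lambda>(r::real) s t p. IO d1 k1 s (IO d2 k2 t H) p) r s t p - \<Phi> p) \<le> K0 * w (1/3) r + K0 * w (1/3) s + K0 * w (1/3) t"
  proof (rule rate_limit3[OF w13_lim])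
    fix r s t r' s' t' :: real and p assume h: "0 \<le> r" "r \<le> r'" "0 \<le> s" "s \<le> s'" "0 \<le> t" "t \<le> t'"
    have "norm (IO d1 k1 s' (IO d2 k2 t' H) p - IO d1 k1 s (IO d2 k2 t H) p) \<le> K0 * w (1/3) s + K0 * w (1/3) t"
      by (rule cauchy) (use h in auto)
    moreover have "0 \<le> K0 * w (1/3) r" using K0 w_nonneg by auto
    ultimately show "norm ((\<lambda>(r::real) s t p. IO d1 k1 s (IO d2 k2 t H) p) r' s' t' p - (\<lambda>(r::real) s t p. IO d1 k1 s (IO d2 k2 t H) p) r s t p)
        \<le> K0 * w (1/3) r + K0 * w (1/3) s + K0 * w (1/3) t" by simp
  qed
  then obtain \<Phi> where \<Phi>: "\<And>p (r::real) (s::real) (t::real). 0 \<le> r \<Longrightarrow> 0 \<le> s \<Longrightarrow> 0 \<le> t \<Longrightarrow>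
      norm (IO d1 k1 s (IO d2 k2 t H) p - \<Phi> p) \<le> K0 * w (1/3) r + K0 * w (1/3) s + K0 * w (1/3) t" by blast
  show ?thesis
  proof (intro exI[of _ \<Phi>] exI[of _ "2 * K0"] allI impI)
    fix s t :: real and p assume "s \<ge> 0" "t \<ge> 0"
    then have "norm (IO d1 k1 s (IO d2 k2 t H) p - \<Phi> p) \<le> K0 * w (1/3) s + K0 * w (1/3) s + K0 * w (1/3) t"
      using \<Phi> by blast
    moreover have "0 \<le> K0 * w (1/3) t" using K0 w_nonneg by auto
    ultimately show "norm (IO d1 k1 s (IO d2 k2 t H) p - \<Phi> p) \<le> 2 * K0 * w (1/3) s + 2 * K0 * w (1/3) t"
      by (simp add: algebra_simps)
  qed
qed

lemma Bd_eqI: "Bd H M e \<Longrightarrow> e = e' \<Longrightarrow> Bd H M e'"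
  by simp



lemma dadc: "(a - b) + (b - c) = (a::complex) - c"
  by simp

lemma Bd_fun_cong: "Bd H M e \<Longrightarrow> (\<And>p. H p = H' p) \<Longrightarrow> Bd H' M e"
proof -
  assume "Bd H M e" "\<And>p. H p = H' p"
  moreover then have "H = H'" by (intro ext) simp
  ultimately show ?thesis by simp
qed

lemma Bd_PO_le':
  assumes "Bd H M e" "k \<noteq> 0" "t \<ge> 0" "e d \<ge> 0" "e(d := 0) = e'" "2 * M / \<bar>k\<bar> \<le> M'"
  shows "Bd (PO d k t H) M' e'"
  using Bd_mono[OF Bd_PO_le[OF assms(1-4)] assms(6)] unfolding assms(5) .

lemma Bd_PO_w':
  assumes "Bd H M e" "k \<noteq> 0" "t \<ge> 0" "e d = 1/3" "e(d := 0) = e'" "2 * M / \<bar>k\<bar> * w (1/3) t \<le> M'"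
  shows "Bd (PO d k t H) M' e'"
  using Bd_mono[OF Bd_PO_w[OF assms(1-4)] assms(6)] unfolding assms(5) .

lemma Bd_IO':
  assumes "Bd H M e" "e d = 4/3" "t \<ge> 0" "cont H" "e(d := 0) = e'" "6 * M \<le> M'"
  shows "Bd (IO d k t H) M' e'"
  using Bd_mono[OF Bd_IO[OF assms(1-4)] assms(6)] unfolding assms(5) .

lemma Bd_IO_diff':
  assumes "Bd H M e" "e d = 4/3" "0 \<le> t" "t \<le> t'" "cont H" "e(d := 0) = e'" "6 * M * w (1/3) t \<le> M'"
  shows "Bd (\<lambda>p. IO d k t' H p - IO d k t H p) M' e'"
  using Bd_mono[OF Bd_IO_diff[OF assms(1-5)] assms(7)] unfolding assms(6) .

lemma bounds2a:
  assumes dd: "d1 \<noteq> d2" and k: "k1 \<noteq> 0" "k2 \<noteq> 0"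
    and c: "cont H" "cont H1" "cont H2" "cont H12"
    and e: "e d1 = 1/3" "e d2 = 1/3"
    and B: "Bd H M e" "Bd H1 M (e(d1 := 4/3))" "Bd H2 M (e(d2 := 4/3))" "Bd H12 M (e(d1 := 4/3, d2 := 4/3))"
    and st: "s \<ge> 0" "t \<ge> 0"
  shows "Bd (\<lambda>p. PO d1 k1 s (PO d2 k2 t H) p + (1 / (\<i> * of_real k2)) * PO d1 k1 s (IO d2 k2 t H2) p
      + (1 / (\<i> * of_real k1)) * IO d1 k1 s (PO d2 k2 t H1) p)
      ((2 * (2 * M / \<bar>k2\<bar>) / \<bar>k1\<bar> + norm (1 / (\<i> * of_real k2)) * (2 * (6 * M) / \<bar>k1\<bar>)) * w (1/3) s
       + norm (1 / (\<i> * of_real k1)) * (6 * (2 * M / \<bar>k2\<bar>)) * w (1/3) t) (e(d1 := 0, d2 := 0))"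
proof -
  define c1 where "c1 = 1 / (\<i> * of_real k1)"
  define c2 where "c2 = 1 / (\<i> * of_real k2)"
  have M: "M \<ge> 0" using Bd_M_nonneg[OF B(1)] .
  have E1: "(e(d2 := 0))(d1 := 0) = e(d1 := 0, d2 := 0)"
    using dd by (auto simp: fun_eq_iff)
  have E2: "(e(d2 := 4/3, d2 := 0))(d1 := 0) = e(d1 := 0, d2 := 0)"
    using dd by (auto simp: fun_eq_iff)
  have E3: "(e(d1 := 4/3, d2 := 0))(d1 := 0) = e(d1 := 0, d2 := 0)"
    using dd by (auto simp: fun_eq_iff)
  have E4: "(e(d1 := 4/3, d2 := 4/3, d2 := 0))(d1 := 0) = e(d1 := 0, d2 := 0)"
    using dd by (auto simp: fun_eq_iff)
  have ta: "Bd (PO d1 k1 s (PO d2 k2 t H)) (2 * (2 * M / \<bar>k2\<bar>) / \<bar>k1\<bar> * w (1/3) s) (e(d1 := 0, d2 := 0))"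
  proof -
    have "Bd (PO d2 k2 t H) (2 * M / \<bar>k2\<bar>) (e(d2 := 0))"
      by (rule Bd_PO_le'[OF B(1) k(2) st(2)]) (use e in simp_all)
    then show ?thesis
      by (rule Bd_PO_w'[OF _ k(1) st(1)]) (use dd e E1 in simp_all)
  qed
  have tb: "Bd (PO d1 k1 s (IO d2 k2 t H2)) (2 * (6 * M) / \<bar>k1\<bar> * w (1/3) s) (e(d1 := 0, d2 := 0))"
  proof -
    have "Bd (IO d2 k2 t H2) (6 * M) (e(d2 := 4/3, d2 := 0))"
      by (rule Bd_IO'[OF B(3) _ st(2) c(3)]) simp_all
    then show ?thesis
      by (rule Bd_PO_w'[OF _ k(1) st(1)]) (use dd e E2 in simp_all)
  qed
  have tc: "Bd (IO d1 k1 s (PO d2 k2 t H1)) (6 * (2 * M / \<bar>k2\<bar>) * w (1/3) t) (e(d1 := 0, d2 := 0))"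
  proof -
    have "Bd (PO d2 k2 t H1) (2 * M / \<bar>k2\<bar> * w (1/3) t) (e(d1 := 4/3, d2 := 0))"
      by (rule Bd_PO_w'[OF B(2) k(2) st(2)]) (use dd e in simp_all)
    then show ?thesis
      by (rule Bd_IO'[OF _ _ st(1) cont_PO[OF c(2)]]) (use dd E3 in simp_all)
  qed
  have sum: "Bd (\<lambda>p. PO d1 k1 s (PO d2 k2 t H) p + (c2 * PO d1 k1 s (IO d2 k2 t H2) p + c1 * IO d1 k1 s (PO d2 k2 t H1) p))
     (2 * (2 * M / \<bar>k2\<bar>) / \<bar>k1\<bar> * w (1/3) s + (norm c2 * (2 * (6 * M) / \<bar>k1\<bar> * w (1/3) s)
       + norm c1 * (6 * (2 * M / \<bar>k2\<bar>) * w (1/3) t))) (e(d1 := 0, d2 := 0))"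
    by (intro Bd_add Bd_cmult ta tb tc)
  have eqf: "(\<lambda>p. PO d1 k1 s (PO d2 k2 t H) p + (1 / (\<i> * of_real k2)) * PO d1 k1 s (IO d2 k2 t H2) p
      + (1 / (\<i> * of_real k1)) * IO d1 k1 s (PO d2 k2 t H1) p)
    = (\<lambda>p. PO d1 k1 s (PO d2 k2 t H) p + (c2 * PO d1 k1 s (IO d2 k2 t H2) p + c1 * IO d1 k1 s (PO d2 k2 t H1) p))"
    unfolding c1_def c2_def by (simp add: add.assoc)
  have eqM: "(2 * (2 * M / \<bar>k2\<bar>) / \<bar>k1\<bar> + norm (1 / (\<i> * of_real k2)) * (2 * (6 * M) / \<bar>k1\<bar>)) * w (1/3) s
       + norm (1 / (\<i> * of_real k1)) * (6 * (2 * M / \<bar>k2\<bar>)) * w (1/3) t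
     = 2 * (2 * M / \<bar>k2\<bar>) / \<bar>k1\<bar> * w (1/3) s + (norm c2 * (2 * (6 * M) / \<bar>k1\<bar> * w (1/3) s)
       + norm c1 * (6 * (2 * M / \<bar>k2\<bar>) * w (1/3) t))"
    unfolding c1_def c2_def by (simp only: distrib_right mult.assoc add.assoc)
  show "Bd (\<lambda>p. PO d1 k1 s (PO d2 k2 t H) p + (1 / (\<i> * of_real k2)) * PO d1 k1 s (IO d2 k2 t H2) p
      + (1 / (\<i> * of_real k1)) * IO d1 k1 s (PO d2 k2 t H1) p)
      ((2 * (2 * M / \<bar>k2\<bar>) / \<bar>k1\<bar> + norm (1 / (\<i> * of_real k2)) * (2 * (6 * M) / \<bar>k1\<bar>)) * w (1/3) s
       + norm (1 / (\<i> * of_real k1)) * (6 * (2 * M / \<bar>k2\<bar>)) * w (1/3) t) (e(d1 := 0, d2 := 0))"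
    apply (rule Bd_fun_cong[OF Bd_mono[OF sum]])
     apply (simp only: c1_def c2_def distrib_right mult.assoc add.assoc order_refl)
    apply (simp only: c1_def c2_def add.assoc)
    done
qed

lemma bounds2b:
  assumes dd: "d1 \<noteq> d2" and k: "k1 \<noteq> 0" "k2 \<noteq> 0"
    and c: "cont H" "cont H1" "cont H2" "cont H12"
    and e: "e d1 = 1/3" "e d2 = 1/3"
    and B: "Bd H M e" "Bd H1 M (e(d1 := 4/3))" "Bd H2 M (e(d2 := 4/3))" "Bd H12 M (e(d1 := 4/3, d2 := 4/3))"
    and st: "s \<ge> 0" "t \<ge> 0"
  shows "Bd (IO d1 k1 s (IO d2 k2 t H12)) (36 * M) (e(d1 := 0, d2 := 0))"
proof -
  have E4: "(e(d1 := 4/3, d2 := 4/3, d2 := 0))(d1 := 0) = e(d1 := 0, d2 := 0)"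
    using dd by (auto simp: fun_eq_iff)
  have b0: "Bd (IO d2 k2 t H12) (6 * M) (e(d1 := 4/3, d2 := 4/3, d2 := 0))"
    by (rule Bd_IO'[OF B(4) _ st(2) c(4)]) simp_all
  show ?thesis
    by (rule Bd_IO'[OF b0 _ st(1) cont_IO[OF c(4)]]) (use dd E4 in simp_all)
qed

lemma bounds2c:
  assumes dd: "d1 \<noteq> d2" and k: "k1 \<noteq> 0" "k2 \<noteq> 0"
    and c: "cont H" "cont H1" "cont H2" "cont H12"
    and e: "e d1 = 1/3" "e d2 = 1/3"
    and B: "Bd H M e" "Bd H1 M (e(d1 := 4/3))" "Bd H2 M (e(d2 := 4/3))" "Bd H12 M (e(d1 := 4/3, d2 := 4/3))"
    and st: "s \<ge> 0" "t \<ge> 0"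
    and h: "s \<le> s'" "t \<le> t'"
  shows "Bd (\<lambda>p. IO d1 k1 s' (IO d2 k2 t' H12) p - IO d1 k1 s (IO d2 k2 t H12) p)
          (36 * M * w (1/3) s + 36 * M * w (1/3) t) (e(d1 := 0, d2 := 0))"
proof -
  have M: "M \<ge> 0" using Bd_M_nonneg[OF B(1)] .
  have E4: "(e(d1 := 4/3, d2 := 4/3, d2 := 0))(d1 := 0) = e(d1 := 0, d2 := 0)"
    using dd by (auto simp: fun_eq_iff)
  have b0: "Bd (IO d2 k2 t' H12) (6 * M) (e(d1 := 4/3, d2 := 4/3, d2 := 0))"
    by (rule Bd_IO'[OF B(4) _ _ c(4)]) (use st h in simp_all)
  have n1: "Bd (\<lambda>p. IO d1 k1 s' (IO d2 k2 t' H12) p - IO d1 k1 s (IO d2 k2 t' H12) p)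
        (36 * M * w (1/3) s) (e(d1 := 0, d2 := 0))"
    by (rule Bd_IO_diff'[OF b0 _ st(1) h(1) cont_IO[OF c(4)]]) (use dd st h E4 in simp_all)
  have n2: "Bd (\<lambda>p. IO d1 k1 s (IO d2 k2 t' H12) p - IO d1 k1 s (IO d2 k2 t H12) p)
        (36 * M * w (1/3) t) (e(d1 := 0, d2 := 0))"
  proof -
    have b1: "Bd (\<lambda>p. IO d2 k2 t' H12 p - IO d2 k2 t H12 p) (6 * M * w (1/3) t) (e(d1 := 4/3, d2 := 4/3, d2 := 0))"
      by (rule Bd_IO_diff'[OF B(4) _ st(2) h(2) c(4)]) simp_all
    have c1': "cont (\<lambda>p. IO d2 k2 t' H12 p - IO d2 k2 t H12 p)"
      by (intro continuous_intros c)
    have "Bd (IO d1 k1 s (\<lambda>p. IO d2 k2 t' H12 p - IO d2 k2 t H12 p)) (36 * M * w (1/3) t) (e(d1 := 0, d2 := 0))"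
      by (rule Bd_IO'[OF b1 _ st(1) c1']) (use dd E4 in simp_all)
    moreover have "IO d1 k1 s (\<lambda>p. IO d2 k2 t' H12 p - IO d2 k2 t H12 p)
        = (\<lambda>p. IO d1 k1 s (IO d2 k2 t' H12) p - IO d1 k1 s (IO d2 k2 t H12) p)"
      by (rule IO_diff) (auto intro!: continuous_intros c)
    ultimately show ?thesis by simp
  qed
  show ?thesis
    by (rule Bd_fun_cong[OF Bd_add[OF n1 n2]]) (rule dadc)
qed

lemma conv3:
  assumes k: "k1 \<noteq> 0" "k2 \<noteq> 0" "k3 \<noteq> 0"
    and c: "cont G" "cont Gx" "cont Gy" "cont Gz" "cont Gxy" "cont Gxz" "cont Gyz" "cont Gxyz"
    and hd: "HD DZ G Gz" "HD DY G Gy" "HD DY Gz Gyz" "HD DX G Gx" "HD DX Gz Gxz" "HD DX Gy Gxy" "HD DX Gyz Gxyz"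
    and B: "Bd G M (e3 {})" "Bd Gy M ((e3 {})(DY := 4/3))" "Bd Gx M ((e3 {})(DX := 4/3))"
      "Bd Gxy M ((e3 {})(DY := 4/3, DX := 4/3))"
      "Bd Gz M (e3 {DZ})" "Bd Gyz M ((e3 {DZ})(DY := 4/3))" "Bd Gxz M ((e3 {DZ})(DX := 4/3))"
      "Bd Gxyz M ((e3 {DZ})(DY := 4/3, DX := 4/3))"
  shows "\<exists>\<Phi> K. \<forall>r s t p. r \<ge> 0 \<longrightarrow> s \<ge> 0 \<longrightarrow> t \<ge> 0 \<longrightarrow>
     norm (IO DZ k3 r (IO DY k2 s (IO DX k1 t G)) p - \<Phi> p) \<le> K * w (1/3) r + K * w (1/3) s + K * w (1/3) t"
proof -
  define c1 where "c1 = 1 / (\<i> * of_real k1)"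
  define c2 where "c2 = 1 / (\<i> * of_real k2)"
  define c3 where "c3 = 1 / (\<i> * of_real k3)"
  have M: "M \<ge> 0" using Bd_M_nonneg[OF B(1)] .
  have YX: "DY \<noteq> DX" by simp
  define RR where "RR H H1 H2 s t = (\<lambda>p. PO DY k2 s (PO DX k1 t H) p + c1 * PO DY k2 s (IO DX k1 t H2) p
      + c2 * IO DY k2 s (PO DX k1 t H1) p)" for H H1 H2 s t
  define Mn where "Mn H12 s t = IO DY k2 s (IO DX k1 t H12)" for H12 s t
  have cRR: "cont (RR H H1 H2 s t)" if "cont H" "cont H1" "cont H2" for H H1 H2 s t
    unfolding RR_def by (intro continuous_intros that)
  have cMn: "cont (Mn H12 s t)" if "cont H12" for H12 s t
    unfolding Mn_def by (intro continuous_intros that)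
  have exp: "IO DY k2 s (IO DX k1 t H) = (\<lambda>p. RR H H1 H2 s t p + c2 * c1 * Mn H12 s t p)"
    if "s \<ge> 0" "t \<ge> 0" "cont H" "cont H1" "cont H2" "cont H12" "HD DY H H1" "HD DX H H2" "HD DX H1 H12"
    for H H1 H2 H12 s t
    unfolding RR_def Mn_def c1_def c2_def
    by (subst expand2[OF YX k(2) k(1) that]) (simp add: algebra_simps)
  define \<alpha> where "\<alpha> = (2 * (2 * M / \<bar>k1\<bar>) / \<bar>k2\<bar> + norm c1 * (2 * (6 * M) / \<bar>k2\<bar>))"
  define \<beta> where "\<beta> = norm c2 * (6 * (2 * M / \<bar>k1\<bar>))"
  have \<alpha>: "\<alpha> \<ge> 0" and \<beta>: "\<beta> \<ge> 0" unfolding \<alpha>_def \<beta>_def using M by auto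
  have bRR: "Bd (RR H H1 H2 s t) (\<alpha> * w (1/3) s + \<beta> * w (1/3) t) (e(DY := 0, DX := 0))"
    if "s \<ge> 0" "t \<ge> 0" "cont H" "cont H1" "cont H2" "cont H12" "e DY = 1/3" "e DX = 1/3"
       "Bd H M e" "Bd H1 M (e(DY := 4/3))" "Bd H2 M (e(DX := 4/3))" "Bd H12 M (e(DY := 4/3, DX := 4/3))"
    for H H1 H2 H12 s t e
    using bounds2a[OF YX k(2) k(1) that(3-12) that(1,2)]
    unfolding RR_def \<alpha>_def \<beta>_def c1_def c2_def .
  have bMn: "Bd (Mn H12 s t) (36 * M) (e(DY := 0, DX := 0))"
    if "s \<ge> 0" "t \<ge> 0" "cont H" "cont H1" "cont H2" "cont H12" "e DY = 1/3" "e DX = 1/3"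
       "Bd H M e" "Bd H1 M (e(DY := 4/3))" "Bd H2 M (e(DX := 4/3))" "Bd H12 M (e(DY := 4/3, DX := 4/3))"
    for H H1 H2 H12 s t e
    using bounds2b[OF YX k(2) k(1) that(3-12) that(1,2)] unfolding Mn_def .
  have cMnd: "Bd (\<lambda>p. Mn H12 s' t' p - Mn H12 s t p) (36 * M * w (1/3) s + 36 * M * w (1/3) t) (e(DY := 0, DX := 0))"
    if "s \<ge> 0" "t \<ge> 0" "cont H" "cont H1" "cont H2" "cont H12" "e DY = 1/3" "e DX = 1/3"
       "Bd H M e" "Bd H1 M (e(DY := 4/3))" "Bd H2 M (e(DX := 4/3))" "Bd H12 M (e(DY := 4/3, DX := 4/3))"
       "s \<le> s'" "t \<le> t'"
    for H H1 H2 H12 s t e s' t'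
    using bounds2c[OF YX k(2) k(1) that(3-12) that(1,2) that(13,14)] unfolding Mn_def .
  have hdz: "HD DZ (IO DY k2 s (IO DX k1 t G)) (IO DY k2 s (IO DX k1 t Gz))" for s t
    by (intro HD_IO hd(1) c(1) c(4) cont_IO) simp_all
  define eA where "eA = (e3 {})(DY := 0, DX := 0)"
  define KA where "KA = \<alpha> + \<beta> + norm (c2 * c1) * (36 * M)"
  have KA: "KA \<ge> 0" unfolding KA_def using \<alpha> \<beta> M by simp
  have bFA: "Bd (IO DY k2 s (IO DX k1 t G)) KA eA" if "s \<ge> 0" "t \<ge> 0" for s t
  proof -
    have "Bd (\<lambda>p. RR G Gy Gx s t p + c2 * c1 * Mn Gxy s t p) ((\<alpha> * w (1/3) s + \<beta> * w (1/3) t) + norm (c2 * c1) * (36 * M)) eA"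
      unfolding eA_def
      by (intro Bd_add Bd_cmult bRR[OF that c(1,3,2,5)] bMn[OF that c(1,3,2,5)] B(1-4)) (simp_all add: e3_def)
    moreover have "(\<alpha> * w (1/3) s + \<beta> * w (1/3) t) + norm (c2 * c1) * (36 * M) \<le> KA"
    proof -
      have "\<alpha> * w (1/3) s \<le> \<alpha> * 1" "\<beta> * w (1/3) t \<le> \<beta> * 1"
        by (intro mult_left_mono w_le1 \<alpha> \<beta>; simp)+
      then show ?thesis unfolding KA_def by simp
    qed
    ultimately have "Bd (\<lambda>p. RR G Gy Gx s t p + c2 * c1 * Mn Gxy s t p) KA eA" by (rule Bd_mono)
    then show ?thesis
      by (subst exp[OF that c(1,3,2,5) hd(2,4,6)])
  qed
  have tA: "norm (PO DZ k3 r (IO DY k2 s (IO DX k1 t G)) p) \<le> 2 * KA / \<bar>k3\<bar> * w (1/3) r"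
    if "r \<ge> 0" "s \<ge> 0" "t \<ge> 0" for r s t p
  proof -
    have "Bd (PO DZ k3 r (IO DY k2 s (IO DX k1 t G))) (2 * KA / \<bar>k3\<bar> * w (1/3) r) (eA(DZ := 0))"
      by (rule Bd_PO_w'[OF bFA[OF that(2,3)] k(3) that(1)]) (simp_all add: eA_def e3_def)
    then show ?thesis by (rule Bd_final') (simp add: eA_def e3_def)
  qed
  define eB where "eB = (e3 {DZ})(DY := 0, DX := 0)"
  have eB1: "eB DZ = 4/3" unfolding eB_def by (simp add: e3_def)
  have eB2: "eB(DZ := 0) = (\<lambda>_. 0)"
  proof
    fix x show "(eB(DZ := 0)) x = 0" unfolding eB_def by (cases x) simp_all
  qed
  note eB = eB1 eB2
  have expB: "IO DZ k3 r (IO DY k2 s (IO DX k1 t Gz))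
      = (\<lambda>p. IO DZ k3 r (RR Gz Gyz Gxz s t) p + c2 * c1 * IO DZ k3 r (Mn Gxyz s t) p)"
    if "s \<ge> 0" "t \<ge> 0" for r s t
  proof -
    have "IO DZ k3 r (IO DY k2 s (IO DX k1 t Gz)) = IO DZ k3 r (\<lambda>p. RR Gz Gyz Gxz s t p + c2 * c1 * Mn Gxyz s t p)"
      by (subst exp[OF that c(4,7,6,8) hd(3,5,7)]) simp
    also have "\<dots> = (\<lambda>p. IO DZ k3 r (RR Gz Gyz Gxz s t) p + IO DZ k3 r (\<lambda>p. c2 * c1 * Mn Gxyz s t p) p)"
      by (rule IO_add) (intro continuous_intros cRR cMn c)+
    also have "\<dots> = (\<lambda>p. IO DZ k3 r (RR Gz Gyz Gxz s t) p + c2 * c1 * IO DZ k3 r (Mn Gxyz s t) p)"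
      by (simp add: IO_cmult)
    finally show ?thesis .
  qed
  have tB: "norm (IO DZ k3 r (RR Gz Gyz Gxz s t) p) \<le> 6 * \<alpha> * w (1/3) s + 6 * \<beta> * w (1/3) t"
    if "r \<ge> 0" "s \<ge> 0" "t \<ge> 0" for r s t p
  proof -
    have "Bd (IO DZ k3 r (RR Gz Gyz Gxz s t)) (6 * (\<alpha> * w (1/3) s + \<beta> * w (1/3) t)) (eB(DZ := 0))"
      by (rule Bd_IO'[OF bRR[OF that(2,3) c(4,7,6,8) _ _ B(5-8), folded eB_def] eB(1) that(1) cRR[OF c(4,7,6)]])
         (simp_all add: e3_def)
    then have "norm (IO DZ k3 r (RR Gz Gyz Gxz s t) p) \<le> 6 * (\<alpha> * w (1/3) s + \<beta> * w (1/3) t)"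
      by (rule Bd_final') (simp add: eB(2))
    then show ?thesis by (simp add: algebra_simps)
  qed
  define Main where "Main r s t p = IO DZ k3 r (Mn Gxyz s t) p" for r s t p
  have mainD: "norm (Main r' s' t' p - Main r s t p) \<le> 216 * M * w (1/3) r + 216 * M * w (1/3) s + 216 * M * w (1/3) t"
    if h: "0 \<le> r" "r \<le> r'" "0 \<le> s" "s \<le> s'" "0 \<le> t" "t \<le> t'" for r s t r' s' t' p
  proof -
    have b1: "Bd (Mn Gxyz s' t') (36 * M) eB"
      unfolding eB_def by (rule bMn[OF _ _ c(4,7,6,8) _ _ B(5-8)]) (use h in \<open>simp_all add: e3_def\<close>)
    have n1: "Bd (\<lambda>p. IO DZ k3 r' (Mn Gxyz s' t') p - IO DZ k3 r (Mn Gxyz s' t') p) (216 * M * w (1/3) r) (eB(DZ := 0))"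
      by (rule Bd_IO_diff'[OF b1 eB(1) h(1,2) cMn[OF c(8)]]) simp_all
    have b2: "Bd (\<lambda>p. Mn Gxyz s' t' p - Mn Gxyz s t p) (36 * M * w (1/3) s + 36 * M * w (1/3) t) eB"
      unfolding eB_def by (rule cMnd[OF _ _ c(4,7,6,8) _ _ B(5-8)]) (use h in \<open>simp_all add: e3_def\<close>)
    have cd: "cont (\<lambda>p. Mn Gxyz s' t' p - Mn Gxyz s t p)" by (intro continuous_intros cMn c)
    have n2: "Bd (IO DZ k3 r (\<lambda>p. Mn Gxyz s' t' p - Mn Gxyz s t p)) (216 * M * w (1/3) s + 216 * M * w (1/3) t) (eB(DZ := 0))"
      by (rule Bd_IO'[OF b2 eB(1) h(1) cd]) simp_all
    have eqd: "IO DZ k3 r (\<lambda>p. Mn Gxyz s' t' p - Mn Gxyz s t p) p = IO DZ k3 r (Mn Gxyz s' t') p - IO DZ k3 r (Mn Gxyz s t) p"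
      by (subst IO_diff) (simp_all add: cMn c)
    have "norm (Main r' s' t' p - Main r s t p) \<le> norm (IO DZ k3 r' (Mn Gxyz s' t') p - IO DZ k3 r (Mn Gxyz s' t') p)
        + norm (IO DZ k3 r (\<lambda>p. Mn Gxyz s' t' p - Mn Gxyz s t p) p)"
      unfolding Main_def eqd by (rule norm_diff_triangle_le[of _ "IO DZ k3 r (Mn Gxyz s' t') p"]) simp_all
    also have "\<dots> \<le> 216 * M * w (1/3) r + (216 * M * w (1/3) s + 216 * M * w (1/3) t)"
      by (intro add_mono Bd_final'[OF n1] Bd_final'[OF n2]) (simp_all add: eB(2))
    finally show ?thesis by simp
  qed
  define R3 where "R3 r s t p = PO DZ k3 r (IO DY k2 s (IO DX k1 t G)) p + c3 * IO DZ k3 r (RR Gz Gyz Gxz s t) p"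
    for r s t p
  have eq3: "IO DZ k3 r (IO DY k2 s (IO DX k1 t G)) p = R3 r s t p + c3 * c2 * c1 * Main r s t p"
    if "r \<ge> 0" "s \<ge> 0" "t \<ge> 0" for r s t p
  proof -
    have "IO DZ k3 r (IO DY k2 s (IO DX k1 t G)) p
        = PO DZ k3 r (IO DY k2 s (IO DX k1 t G)) p + c3 * IO DZ k3 r (IO DY k2 s (IO DX k1 t Gz)) p"
      unfolding c3_def
      by (subst IBP_IO[OF hdz _ that(1) k(3)]) (simp_all add: cont_IO c)
    then show ?thesis
      unfolding R3_def Main_def expB[OF that(2,3)] by (simp add: algebra_simps)
  qed
  define K1 where "K1 = 2 * KA / \<bar>k3\<bar> + norm c3 * (6 * \<alpha> + 6 * \<beta>)"
  have K1: "K1 \<ge> 0" unfolding K1_def using KA \<alpha> \<beta> by simp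
  have bR3: "norm (R3 r s t p) \<le> K1 * w (1/3) r + K1 * w (1/3) s + K1 * w (1/3) t"
    if "r \<ge> 0" "s \<ge> 0" "t \<ge> 0" for r s t p
  proof -
    have "norm (R3 r s t p) \<le> 2 * KA / \<bar>k3\<bar> * w (1/3) r + norm c3 * (6 * \<alpha> * w (1/3) s + 6 * \<beta> * w (1/3) t)"
      unfolding R3_def
      by (rule order_trans[OF norm_triangle_ineq], unfold norm_mult, intro add_mono tA mult_left_mono tB that) simp
    also have "\<dots> \<le> K1 * w (1/3) r + K1 * w (1/3) s + K1 * w (1/3) t"
    proof -
      have "2 * KA / \<bar>k3\<bar> * w (1/3) r \<le> K1 * w (1/3) r"
        by (intro mult_right_mono w_nonneg) (auto simp: K1_def \<alpha> \<beta>)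
      moreover have "norm c3 * (6 * \<alpha> * w (1/3) s) \<le> K1 * w (1/3) s"
        unfolding mult.assoc[symmetric]
        by (intro mult_right_mono w_nonneg) (auto simp: K1_def \<beta> KA algebra_simps)
      moreover have "norm c3 * (6 * \<beta> * w (1/3) t) \<le> K1 * w (1/3) t"
        unfolding mult.assoc[symmetric]
        by (intro mult_right_mono w_nonneg) (auto simp: K1_def \<alpha> KA algebra_simps)
      ultimately show ?thesis by (simp add: algebra_simps)
    qed
    finally show ?thesis .
  qed
  define K0 where "K0 = 2 * K1 + norm (c3 * c2 * c1) * (216 * M)"
  have K0: "K0 \<ge> 0" unfolding K0_def using K1 M by simp
  have cauchy: "norm (IO DZ k3 r' (IO DY k2 s' (IO DX k1 t' G)) p - IO DZ k3 r (IO DY k2 s (IO DX k1 t G)) p)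
      \<le> K0 * w (1/3) r + K0 * w (1/3) s + K0 * w (1/3) t"
    if h: "0 \<le> r" "r \<le> r'" "0 \<le> s" "s \<le> s'" "0 \<le> t" "t \<le> t'" for r s t r' s' t' p
  proof -
    have "IO DZ k3 r' (IO DY k2 s' (IO DX k1 t' G)) p - IO DZ k3 r (IO DY k2 s (IO DX k1 t G)) p
        = R3 r' s' t' p - R3 r s t p + c3 * c2 * c1 * (Main r' s' t' p - Main r s t p)"
      using eq3[of r' s' t' p] eq3[of r s t p] h by (simp add: algebra_simps)
    also have "norm \<dots> \<le> norm (R3 r' s' t' p) + norm (R3 r s t p) + norm (c3 * c2 * c1) * norm (Main r' s' t' p - Main r s t p)"
      by (rule order_trans[OF norm_triangle_ineq], unfold norm_mult, intro add_mono norm_triangle_ineq4 order_refl)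
    also have "\<dots> \<le> (K1 * w (1/3) r' + K1 * w (1/3) s' + K1 * w (1/3) t') + (K1 * w (1/3) r + K1 * w (1/3) s + K1 * w (1/3) t)
        + norm (c3 * c2 * c1) * (216 * M * w (1/3) r + 216 * M * w (1/3) s + 216 * M * w (1/3) t)"
      by (intro add_mono bR3 mult_left_mono mainD norm_ge_zero) (use h in auto)
    also have "\<dots> \<le> (K1 * w (1/3) r + K1 * w (1/3) s + K1 * w (1/3) t) + (K1 * w (1/3) r + K1 * w (1/3) s + K1 * w (1/3) t)
        + norm (c3 * c2 * c1) * (216 * M * w (1/3) r + 216 * M * w (1/3) s + 216 * M * w (1/3) t)"
      by (intro add_mono mult_left_mono w_mono order_refl) (use h K1 in auto)
    also have "\<dots> = K0 * w (1/3) r + K0 * w (1/3) s + K0 * w (1/3) t" unfolding K0_def by (simp add: algebra_simps)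
    finally show ?thesis .
  qed
  have "\<exists>\<Phi>. \<forall>p (r::real) (s::real) (t::real). 0 \<le> r \<longrightarrow> 0 \<le> s \<longrightarrow> 0 \<le> t \<longrightarrow>
      norm ((\<lambda>r s t p. IO DZ k3 r (IO DY k2 s (IO DX k1 t G)) p) r s t p - \<Phi> p) \<le> K0 * w (1/3) r + K0 * w (1/3) s + K0 * w (1/3) t"
  proof (rule rate_limit3[OF w13_lim])
    fix r s t r' s' t' :: real and p assume h: "0 \<le> r" "r \<le> r'" "0 \<le> s" "s \<le> s'" "0 \<le> t" "t \<le> t'"
    show "norm ((\<lambda>r s t p. IO DZ k3 r (IO DY k2 s (IO DX k1 t G)) p) r' s' t' p - (\<lambda>r s t p. IO DZ k3 r (IO DY k2 s (IO DX k1 t G)) p) r s t p)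
        \<le> K0 * w (1/3) r + K0 * w (1/3) s + K0 * w (1/3) t"
      using cauchy[OF h] by simp
  qed
  then obtain \<Phi> where \<Phi>: "\<And>p (r::real) (s::real) (t::real). 0 \<le> r \<Longrightarrow> 0 \<le> s \<Longrightarrow> 0 \<le> t \<Longrightarrow>
      norm (IO DZ k3 r (IO DY k2 s (IO DX k1 t G)) p - \<Phi> p) \<le> K0 * w (1/3) r + K0 * w (1/3) s + K0 * w (1/3) t"
    by blast
  show ?thesis
  proof (intro exI[of _ \<Phi>] exI[of _ K0] allI impI)
    fix r s t :: real and p assume "r \<ge> 0" "s \<ge> 0" "t \<ge> 0"
    then show "norm (IO DZ k3 r (IO DY k2 s (IO DX k1 t G)) p - \<Phi> p) \<le> K0 * w (1/3) r + K0 * w (1/3) s + K0 * w (1/3) t"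
      by (rule \<Phi>)
  qed
qed

lemma ft1_IO:
  assumes "\<And>a. \<Phi> (upd d a p) = \<phi> a"
  shows "ft1 \<phi> k r = IO d k r \<Phi> p"
  unfolding ft1_def IO_def I1_def EE_def[symmetric] using assms by simp

lemma ft2_IO:
  assumes "\<And>a b. \<Phi> (upd d2 a (upd d1 b p)) = g a b"
  shows "ft2 g ka kb r s = IO d1 kb r (IO d2 ka s \<Phi>) p"
  unfolding ft2_def IO_def I1_def EE_def[symmetric]
  by (intro integral_cong) (simp only: assms integral_mult_left[symmetric])

lemma ft3_IO:
  assumes "\<And>a b c. \<Phi> (upd d3 a (upd d2 b (upd d1 c p))) = g a b c"
  shows "ft3 g ka kb kc r s t = IO d1 kc r (IO d2 kb s (IO d3 ka t \<Phi>)) p"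
  unfolding ft3_def IO_def I1_def EE_def[symmetric]
  by (intro integral_cong) (simp only: assms integral_mult_left[symmetric])

lemma IO_unif:
  assumes c: "cont H1" "cont H2" and e: "\<And>q. norm (H1 q - H2 q) \<le> \<epsilon>" and r: "r \<ge> 0"
  shows "norm (IO d k r H1 p - IO d k r H2 p) \<le> 2 * r * \<epsilon>"
proof -
  have i1: "(\<lambda>a. H1 (upd d a p) * EE k a) integrable_on {-r..r}" by (rule integrable_IO_line[OF c(1)])
  have i2: "(\<lambda>a. H2 (upd d a p) * EE k a) integrable_on {-r..r}" by (rule integrable_IO_line[OF c(2)])
  have "IO d k r H1 p - IO d k r H2 p = integral {-r..r} (\<lambda>a. (H1 (upd d a p) - H2 (upd d a p)) * EE k a)"
    unfolding IO_def I1_def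
    using integral_diff[OF i1 i2]
    by (simp add: left_diff_distrib)
  also have "norm \<dots> \<le> integral {-r..r} (\<lambda>a. \<epsilon>)"
  proof (rule integral_norm_bound_integral)
    have "(\<lambda>a. H1 (upd d a p) * EE k a - H2 (upd d a p) * EE k a) integrable_on {-r..r}"
      by (rule integrable_diff[OF i1 i2])
    then show "(\<lambda>a. (H1 (upd d a p) - H2 (upd d a p)) * EE k a) integrable_on {-r..r}"
      by (simp add: left_diff_distrib)
    show "(\<lambda>a. \<epsilon>) integrable_on {-r..r}" by (rule integrable_const_ivl)
    fix a show "norm ((H1 (upd d a p) - H2 (upd d a p)) * EE k a) \<le> \<epsilon>"
      by (simp add: norm_mult e)
  qed
  also have "\<dots> = 2 * r * \<epsilon>" using r by simp
  finally show ?thesis .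
qed

lemma unif_cont:
  fixes T :: "real \<Rightarrow> p3 \<Rightarrow> complex"
  assumes c: "\<And>t. cont (T t)" and b: "\<And>t q. t \<ge> 0 \<Longrightarrow> norm (T t q - \<Phi> q) \<le> K * w (1/3) t"
  shows "cont \<Phi>"
proof (rule uniform_limit_theorem[where F = at_top and f = T])
  show "\<forall>\<^sub>F n in at_top. continuous_on UNIV (T n)" by (simp add: c)
  show "uniform_limit UNIV T \<Phi> at_top"
    unfolding uniform_limit_iff
  proof (intro allI impI)
    fix e :: real assume e: "e > 0"
    have "\<forall>\<^sub>F t in at_top. K * w (1/3) t < e"
      using w13_lim[of K] e by (auto simp: tendsto_iff dist_norm elim!: allE[of _ e] eventually_mono)
    then show "\<forall>\<^sub>F n in at_top. \<forall>x\<in>UNIV. dist (T n x) (\<Phi> x) < e"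
      using eventually_ge_at_top[of 0]
    proof eventually_elim
      case (elim t)
      show "\<forall>x\<in>UNIV. dist (T t x) (\<Phi> x) < e"
      proof
        fix x :: p3
        show "dist (T t x) (\<Phi> x) < e"
          using b[OF elim(2), of x] elim(1) by (simp add: dist_norm)
      qed
    qed
  qed
qed simp

lemma smooth3_foldr:
  assumes "smooth3 f"
  shows "cont (lift (foldr pd3 ds f))" and "HD d (lift (foldr pd3 ds f)) (lift (pd3 d (foldr pd3 ds f)))"
proof -
  from assms have s: "continuous_on UNIV (\<lambda>p. (foldr pd3 ds f) (fst p) (fst (snd p)) (snd (snd p))) \<and>
      (\<forall>x y z. (\<lambda>t. (foldr pd3 ds f) t y z) field_differentiable (at x)
             \<and> (\<lambda>t. (foldr pd3 ds f) x t z) field_differentiable (at y)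
             \<and> (\<lambda>t. (foldr pd3 ds f) x y t) field_differentiable (at z))"
    unfolding smooth3_def Let_def by blast
  show "cont (lift (foldr pd3 ds f))" by (rule cont_lift) (use s in blast)
  show "HD d (lift (foldr pd3 ds f)) (lift (pd3 d (foldr pd3 ds f)))"
    by (rule HD_lift) (use s in blast)
qed

lemma funpow_pd3: "(pd3 d ^^ i) g = foldr pd3 (replicate i d) g"
  by (induction i) auto

lemma mixed_pd_foldr: "mixed_pd i j k f = foldr pd3 (replicate i DX @ replicate j DY @ replicate k DZ) f"
  unfolding mixed_pd_def funpow_pd3 by simp

lemma normal3_bound:
  assumes n3: "normal3 f" and ijk: "i + j + k \<ge> 1"
    and e: "\<And>d. e d \<ge> 0" "e DX + e DY + e DZ = real (i + j + k + 1)"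
  shows "\<exists>M. Bd (lift (mixed_pd i j k f)) M e"
proof -
  from n3 have sm: "smooth3 f" and dec: "\<exists>C. \<forall>x y z. norm (x, y, z) > 1 \<longrightarrow>
           \<bar>mixed_pd i j k f x y z\<bar> \<le> C / norm (x, y, z) ^ (i + j + k + 1)"
    unfolding normal3_def using ijk by blast+
  then obtain C where C: "\<And>x y z. norm (x, y, z) > 1 \<Longrightarrow>
           \<bar>mixed_pd i j k f x y z\<bar> \<le> C / norm (x, y, z) ^ (i + j + k + 1)" by blast
  show ?thesis
    by (rule weight_bound[OF _ C e]) (unfold mixed_pd_foldr, rule smooth3_foldr(1)[OF sm])
qed

lemma normal3_bound0:
  assumes n3: "normal3 f"
    and e: "\<And>d. e d \<ge> 0" "e DX + e DY + e DZ = real 1"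
  shows "\<exists>M. Bd (lift f) M e"
proof -
  from n3 have sm: "smooth3 f" and dec: "\<exists>C. \<forall>x y z. norm (x, y, z) > 1 \<longrightarrow> \<bar>f x y z\<bar> \<le> C / norm (x, y, z)"
    unfolding normal3_def by blast+
  then obtain C where C: "\<And>x y z. norm (x, y, z) > 1 \<Longrightarrow> \<bar>f x y z\<bar> \<le> C / norm (x, y, z) ^ 1" by auto
  show ?thesis
    by (rule weight_bound[OF _ C e]) (use smooth3_foldr(1)[OF sm, of "[]"] in simp)
qed


lemma e3_upd: "(e3 D)(d := 4/3) = e3 (insert d D)"
  by (rule ext) (simp add: e3_def)

lemma IO_upd_other:
  assumes "\<And>a q. H (upd d' a q) = H q" "d \<noteq> d'"
  shows "IO d k t H (upd d' a p) = IO d k t H p"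
proof -
  have "H (upd d b (upd d' a p)) = H (upd d b p)" for b
    using assms upd_comm[of d d' b a p] by simp
  then show ?thesis unfolding IO_def by simp
qed

lemma lim_pass:
  fixes V L :: complex and T :: "real \<Rightarrow> complex"
  assumes "\<And>t. t \<ge> 0 \<Longrightarrow> norm (V - T t) \<le> c * w (1/3) t"
    and "\<And>t. t \<ge> 0 \<Longrightarrow> norm (T t - L) \<le> a + c' * w (1/3) t"
  shows "norm (V - L) \<le> a"
proof (rule le_limit_arg[of "\<lambda>u. (c + c') * w (1/3) u" 0])
  show "((\<lambda>u. (c + c') * w (1/3) u) \<longlongrightarrow> 0) at_top" by (rule w13_lim)
  fix t :: real assume t: "t \<ge> 0"
  have "norm (V - L) \<le> norm (V - T t) + norm (T t - L)" by (rule norm_diff_triangle_le[of _ "T t"]) simp_all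
  also have "\<dots> \<le> c * w (1/3) t + (a + c' * w (1/3) t)" by (intro add_mono assms t)
  finally show "norm (V - L) \<le> a + (c + c') * w (1/3) t" by (simp add: algebra_simps)
qed


lemma approx1:
  assumes cH: "cont Hh" and cT: "\<And>t. cont (T t)" and b: "\<And>t q. t \<ge> 0 \<Longrightarrow> norm (Hh q - T t q) \<le> K * w (1/3) t"
    and r: "r \<ge> 0" and t: "t \<ge> 0"
  shows "norm (IO d k r Hh p - IO d k r (T t) p) \<le> (2 * r * K) * w (1/3) t"
  using IO_unif[OF cH cT b[OF t] r] by (simp add: mult_ac)

lemma approx2:
  assumes cH: "cont Hh" and cT: "\<And>t. cont (T t)" and b: "\<And>t q. t \<ge> 0 \<Longrightarrow> norm (Hh q - T t q) \<le> K * w (1/3) t"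
    and r: "r \<ge> 0" and s: "s \<ge> 0" and t: "t \<ge> 0"
  shows "norm (IO d1 k r (IO d2 k' s Hh) p - IO d1 k r (IO d2 k' s (T t)) p) \<le> (4 * r * s * K) * w (1/3) t"
proof -
  have "norm (IO d2 k' s Hh q - IO d2 k' s (T t) q) \<le> 2 * s * (K * w (1/3) t)" for q
    by (rule IO_unif[OF cH cT b[OF t] s])
  from IO_unif[OF cont_IO[OF cH] cont_IO[OF cT[of t]] this r]
  show ?thesis by (simp add: mult_ac)
qed

theorem lemma18:
  fixes f :: "real \<Rightarrow> real \<Rightarrow> real \<Rightarrow> real" and k1 k2 k3 :: real
  assumes "normal3 f" and "k1 \<noteq> 0" and "k2 \<noteq> 0" and "k3 \<noteq> 0"
  defines "A \<equiv> \<lambda>y z. fourier1 (\<lambda>x. complex_of_real (f x y z)) k1"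
      and "B \<equiv> \<lambda>x z. fourier1 (\<lambda>y. complex_of_real (f x y z)) k2"
      and "C \<equiv> \<lambda>x y. fourier1 (\<lambda>z. complex_of_real (f x y z)) k3"
      and "F \<equiv> \<lambda>z. fourier2 (\<lambda>x y. complex_of_real (f x y z)) k1 k2"
      and "G \<equiv> \<lambda>y. fourier2 (\<lambda>x z. complex_of_real (f x y z)) k1 k3"
      and "H \<equiv> \<lambda>x. fourier2 (\<lambda>y z. complex_of_real (f x y z)) k2 k3"
  shows "(\<forall>y z. ((\<lambda>r. ft1 (\<lambda>x. complex_of_real (f x y z)) k1 r) \<longlongrightarrow> A y z) at_top) \<and>
         (\<forall>x z. ((\<lambda>r. ft1 (\<lambda>y. complex_of_real (f x y z)) k2 r) \<longlongrightarrow> B x z) at_top) \<and>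
         (\<forall>x y. ((\<lambda>r. ft1 (\<lambda>z. complex_of_real (f x y z)) k3 r) \<longlongrightarrow> C x y) at_top) \<and>
         (\<forall>z. ((\<lambda>(r, s). ft2 (\<lambda>x y. complex_of_real (f x y z)) k1 k2 r s) \<longlongrightarrow> F z)
                 (at_top \<times>\<^sub>F at_top)) \<and>
         (\<forall>y. ((\<lambda>(r, s). ft2 (\<lambda>x z. complex_of_real (f x y z)) k1 k3 r s) \<longlongrightarrow> G y)
                 (at_top \<times>\<^sub>F at_top)) \<and>
         (\<forall>x. ((\<lambda>(r, s). ft2 (\<lambda>y z. complex_of_real (f x y z)) k2 k3 r s) \<longlongrightarrow> H x)
                 (at_top \<times>\<^sub>F at_top)) \<and>
         (\<exists>L. ((\<lambda>(r, s, t). ft3 (\<lambda>x y z. complex_of_real (f x y z)) k1 k2 k3 r s t) \<longlongrightarrow> L)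
                 (at_top \<times>\<^sub>F (at_top \<times>\<^sub>F at_top)) \<and>
              ((\<lambda>(r, s). ft2 A k2 k3 r s) \<longlongrightarrow> L) (at_top \<times>\<^sub>F at_top) \<and>
              ((\<lambda>(r, s). ft2 B k1 k3 r s) \<longlongrightarrow> L) (at_top \<times>\<^sub>F at_top) \<and>
              ((\<lambda>(r, s). ft2 C k1 k2 r s) \<longlongrightarrow> L) (at_top \<times>\<^sub>F at_top) \<and>
              ((\<lambda>r. ft1 F k3 r) \<longlongrightarrow> L) at_top \<and>
              ((\<lambda>r. ft1 G k2 r) \<longlongrightarrow> L) at_top \<and>
              ((\<lambda>r. ft1 H k1 r) \<longlongrightarrow> L) at_top)"
proof -
  note n3 = assms(1)
  have k: "k1 \<noteq> 0" "k2 \<noteq> 0" "k3 \<noteq> 0" using assms(2-4) by auto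
  have sm: "smooth3 f" using n3 unfolding normal3_def by blast
  define G0 where "G0 = lift f"
  define Gx where "Gx = lift (pd3 DX f)"
  define Gy where "Gy = lift (pd3 DY f)"
  define Gz where "Gz = lift (pd3 DZ f)"
  define Gxy where "Gxy = lift (pd3 DX (pd3 DY f))"
  define Gxz where "Gxz = lift (pd3 DX (pd3 DZ f))"
  define Gyz where "Gyz = lift (pd3 DY (pd3 DZ f))"
  define Gxyz where "Gxyz = lift (pd3 DX (pd3 DY (pd3 DZ f)))"
  have cG: "cont G0" "cont Gx" "cont Gy" "cont Gz" "cont Gxy" "cont Gxz" "cont Gyz" "cont Gxyz"
    using smooth3_foldr(1)[OF sm, where ds="[]"] smooth3_foldr(1)[OF sm, where ds="[DX]"]
      smooth3_foldr(1)[OF sm, where ds="[DY]"] smooth3_foldr(1)[OF sm, where ds="[DZ]"]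
      smooth3_foldr(1)[OF sm, where ds="[DX, DY]"] smooth3_foldr(1)[OF sm, where ds="[DX, DZ]"]
      smooth3_foldr(1)[OF sm, where ds="[DY, DZ]"] smooth3_foldr(1)[OF sm, where ds="[DX, DY, DZ]"]
    unfolding G0_def Gx_def Gy_def Gz_def Gxy_def Gxz_def Gyz_def Gxyz_def by simp_all
  have hd: "HD DZ G0 Gz" "HD DY G0 Gy" "HD DY Gz Gyz" "HD DX G0 Gx" "HD DX Gz Gxz" "HD DX Gy Gxy" "HD DX Gyz Gxyz"
    using smooth3_foldr(2)[OF sm, where ds="[]" and d=DZ] smooth3_foldr(2)[OF sm, where ds="[]" and d=DY]
      smooth3_foldr(2)[OF sm, where ds="[DZ]" and d=DY] smooth3_foldr(2)[OF sm, where ds="[]" and d=DX]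
      smooth3_foldr(2)[OF sm, where ds="[DZ]" and d=DX] smooth3_foldr(2)[OF sm, where ds="[DY]" and d=DX]
      smooth3_foldr(2)[OF sm, where ds="[DY, DZ]" and d=DX]
    unfolding G0_def Gx_def Gy_def Gz_def Gxy_def Gxz_def Gyz_def Gxyz_def by simp_all
  obtain M0 where M0: "Bd G0 M0 (e3 {})"
    using normal3_bound0[OF n3, of "e3 {}", OF e3_nonneg] unfolding G0_def by (auto simp: e3_def)
  obtain M1 where M1: "Bd Gx M1 (e3 {DX})"
    using normal3_bound[OF n3, of 1 0 0 "e3 {DX}", OF _ e3_nonneg] unfolding Gx_def by (auto simp: e3_def mixed_pd_def)
  obtain M2 where M2: "Bd Gy M2 (e3 {DY})"
    using normal3_bound[OF n3, of 0 1 0 "e3 {DY}", OF _ e3_nonneg] unfolding Gy_def by (auto simp: e3_def mixed_pd_def)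
  obtain M3 where M3: "Bd Gz M3 (e3 {DZ})"
    using normal3_bound[OF n3, of 0 0 1 "e3 {DZ}", OF _ e3_nonneg] unfolding Gz_def by (auto simp: e3_def mixed_pd_def)
  obtain M4 where M4: "Bd Gxy M4 (e3 {DX, DY})"
    using normal3_bound[OF n3, of 1 1 0 "e3 {DX, DY}", OF _ e3_nonneg] unfolding Gxy_def by (auto simp: e3_def mixed_pd_def)
  obtain M5 where M5: "Bd Gxz M5 (e3 {DX, DZ})"
    using normal3_bound[OF n3, of 1 0 1 "e3 {DX, DZ}", OF _ e3_nonneg] unfolding Gxz_def by (auto simp: e3_def mixed_pd_def)
  obtain M6 where M6: "Bd Gyz M6 (e3 {DY, DZ})"
    using normal3_bound[OF n3, of 0 1 1 "e3 {DY, DZ}", OF _ e3_nonneg] unfolding Gyz_def by (auto simp: e3_def mixed_pd_def)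
  obtain M7 where M7: "Bd Gxyz M7 (e3 {DX, DY, DZ})"
    using normal3_bound[OF n3, of 1 1 1 "e3 {DX, DY, DZ}", OF _ e3_nonneg] unfolding Gxyz_def by (auto simp: e3_def mixed_pd_def)
  define M where "M = M0 + M1 + M2 + M3 + M4 + M5 + M6 + M7"
  have Mi: "M0 \<ge> 0" "M1 \<ge> 0" "M2 \<ge> 0" "M3 \<ge> 0" "M4 \<ge> 0" "M5 \<ge> 0" "M6 \<ge> 0" "M7 \<ge> 0"
    using Bd_M_nonneg M0 M1 M2 M3 M4 M5 M6 M7 by blast+
  have B: "Bd G0 M (e3 {})" "Bd Gx M (e3 {DX})" "Bd Gy M (e3 {DY})" "Bd Gz M (e3 {DZ})"
    "Bd Gxy M (e3 {DX, DY})" "Bd Gxz M (e3 {DX, DZ})" "Bd Gyz M (e3 {DY, DZ})" "Bd Gxyz M (e3 {DX, DY, DZ})"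
    by (rule Bd_mono, rule M0 M1 M2 M3 M4 M5 M6 M7, use Mi in \<open>simp add: M_def\<close>)+
  have Bxy': "Bd Gxy M (e3 {DY, DX})" using B(5) by (simp add: insert_commute)
  have Bxz': "Bd Gxz M (e3 {DZ, DX})" using B(6) by (simp add: insert_commute)
  have Byz': "Bd Gyz M (e3 {DZ, DY})" using B(7) by (simp add: insert_commute)
  obtain \<Phi>A KA where hA: "\<And>t p. t \<ge> 0 \<Longrightarrow> norm (IO DX k1 t G0 p - \<Phi>A p) \<le> KA * w (1/3) t"
    using conv1[OF k(1) cG(1) cG(2) hd(4) B(1) B(2)] by blast
  obtain \<Phi>B KB where hB: "\<And>t p. t \<ge> 0 \<Longrightarrow> norm (IO DY k2 t G0 p - \<Phi>B p) \<le> KB * w (1/3) t"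
    using conv1[OF k(2) cG(1) cG(3) hd(2) B(1) B(3)] by blast
  obtain \<Phi>C KC where hC: "\<And>t p. t \<ge> 0 \<Longrightarrow> norm (IO DZ k3 t G0 p - \<Phi>C p) \<le> KC * w (1/3) t"
    using conv1[OF k(3) cG(1) cG(4) hd(1) B(1) B(4)] by blast
  obtain \<Phi>F KF where hF: "\<And>s t p. s \<ge> 0 \<Longrightarrow> t \<ge> 0 \<Longrightarrow>
      norm (IO DY k2 s (IO DX k1 t G0) p - \<Phi>F p) \<le> KF * w (1/3) s + KF * w (1/3) t"
    using conv2[of DY DX k2 k1 G0 Gy Gx Gxy M, OF _ k(2) k(1) cG(1,3,2,5) hd(2,4,6) B(1,3,2) Bxy'] by blast
  obtain \<Phi>G KG where hG: "\<And>s t p. s \<ge> 0 \<Longrightarrow> t \<ge> 0 \<Longrightarrow>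
      norm (IO DZ k3 s (IO DX k1 t G0) p - \<Phi>G p) \<le> KG * w (1/3) s + KG * w (1/3) t"
    using conv2[of DZ DX k3 k1 G0 Gz Gx Gxz M, OF _ k(3) k(1) cG(1,4,2,6) hd(1,4,5) B(1,4,2) Bxz'] by blast
  obtain \<Phi>H KH where hH: "\<And>s t p. s \<ge> 0 \<Longrightarrow> t \<ge> 0 \<Longrightarrow>
      norm (IO DZ k3 s (IO DY k2 t G0) p - \<Phi>H p) \<le> KH * w (1/3) s + KH * w (1/3) t"
    using conv2[of DZ DY k3 k2 G0 Gz Gy Gyz M, OF _ k(3) k(2) cG(1,4,3,7) hd(1,2,3) B(1,4,3) Byz'] by blast
  obtain \<Phi>3 K3 where h3: "\<And>r s t p. r \<ge> 0 \<Longrightarrow> s \<ge> 0 \<Longrightarrow> t \<ge> 0 \<Longrightarrow>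
      norm (IO DZ k3 r (IO DY k2 s (IO DX k1 t G0)) p - \<Phi>3 p) \<le> K3 * w (1/3) r + K3 * w (1/3) s + K3 * w (1/3) t"
    using conv3[OF k cG hd, unfolded e3_upd, OF B(1,3,2) B(5) B(4) B(7) B(6) B(8)]
    by blast
  define L where "L = \<Phi>3 (0, 0, 0)"
  define T3 where "T3 r s t = IO DZ k3 r (IO DY k2 s (IO DX k1 t G0)) (0, 0, 0)" for r s t
  have T3L: "norm (T3 r s t - L) \<le> K3 * w (1/3) r + K3 * w (1/3) s + K3 * w (1/3) t"
    if "r \<ge> 0" "s \<ge> 0" "t \<ge> 0" for r s t
    unfolding T3_def L_def by (rule h3[OF that])
  have ntl2: "\<not> trivial_limit (at_top \<times>\<^sub>F at_top :: (real \<times> real) filter)"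
    by (simp add: prod_filter_eq_bot)
  have limA: "((\<lambda>r. ft1 (\<lambda>x. complex_of_real (f x y z)) k1 r) \<longlongrightarrow> \<Phi>A (0, y, z)) at_top" for y z
  proof (rule tendsto_rate1[OF w13_lim[of KA]])
    fix t :: real assume t: "t \<ge> 0"
    have "ft1 (\<lambda>x. complex_of_real (f x y z)) k1 t = IO DX k1 t G0 (0, y, z)"
      by (rule ft1_IO) (simp add: G0_def lift_def)
    then show "norm (ft1 (\<lambda>x. complex_of_real (f x y z)) k1 t - \<Phi>A (0, y, z)) \<le> KA * w (1/3) t"
      using hA[OF t] by simp
  qed
  have Aeq: "A y z = \<Phi>A (0, y, z)" for y z
    unfolding assms(5) fourier1_def by (rule tendsto_Lim[OF trivial_limit_at_top_linorder limA])
  have limB: "((\<lambda>r. ft1 (\<lambda>y. complex_of_real (f x y z)) k2 r) \<longlongrightarrow> \<Phi>B (x, 0, z)) at_top" for x z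
  proof (rule tendsto_rate1[OF w13_lim[of KB]])
    fix t :: real assume t: "t \<ge> 0"
    have "ft1 (\<lambda>y. complex_of_real (f x y z)) k2 t = IO DY k2 t G0 (x, 0, z)"
      by (rule ft1_IO) (simp add: G0_def lift_def)
    then show "norm (ft1 (\<lambda>y. complex_of_real (f x y z)) k2 t - \<Phi>B (x, 0, z)) \<le> KB * w (1/3) t"
      using hB[OF t] by simp
  qed
  have Beq: "B x z = \<Phi>B (x, 0, z)" for x z
    unfolding assms(6) fourier1_def by (rule tendsto_Lim[OF trivial_limit_at_top_linorder limB])
  have limC: "((\<lambda>r. ft1 (\<lambda>z. complex_of_real (f x y z)) k3 r) \<longlongrightarrow> \<Phi>C (x, y, 0)) at_top" for x y
  proof (rule tendsto_rate1[OF w13_lim[of KC]])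
    fix t :: real assume t: "t \<ge> 0"
    have "ft1 (\<lambda>z. complex_of_real (f x y z)) k3 t = IO DZ k3 t G0 (x, y, 0)"
      by (rule ft1_IO) (simp add: G0_def lift_def)
    then show "norm (ft1 (\<lambda>z. complex_of_real (f x y z)) k3 t - \<Phi>C (x, y, 0)) \<le> KC * w (1/3) t"
      using hC[OF t] by simp
  qed
  have Ceq: "C x y = \<Phi>C (x, y, 0)" for x y
    unfolding assms(7) fourier1_def by (rule tendsto_Lim[OF trivial_limit_at_top_linorder limC])
  have limF: "((\<lambda>(r, s). ft2 (\<lambda>x y. complex_of_real (f x y z)) k1 k2 r s) \<longlongrightarrow> \<Phi>F (0, 0, z)) (at_top \<times>\<^sub>F at_top)" for z
  proof (rule tendsto_rate2[OF w13_lim[of KF]])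
    fix r s :: real assume rs: "r \<ge> 0" "s \<ge> 0"
    have "ft2 (\<lambda>x y. complex_of_real (f x y z)) k1 k2 r s = IO DY k2 r (IO DX k1 s G0) (0, 0, z)"
      by (rule ft2_IO) (simp add: G0_def lift_def)
    then show "norm (ft2 (\<lambda>x y. complex_of_real (f x y z)) k1 k2 r s - \<Phi>F (0, 0, z)) \<le> KF * w (1/3) r + KF * w (1/3) s"
      using hF[OF rs] by simp
  qed
  have Feq: "F z = \<Phi>F (0, 0, z)" for z
    unfolding assms(8) fourier2_def by (rule tendsto_Lim[OF ntl2 limF])
  have limG: "((\<lambda>(r, s). ft2 (\<lambda>x z. complex_of_real (f x y z)) k1 k3 r s) \<longlongrightarrow> \<Phi>G (0, y, 0)) (at_top \<times>\<^sub>F at_top)" for y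
  proof (rule tendsto_rate2[OF w13_lim[of KG]])
    fix r s :: real assume rs: "r \<ge> 0" "s \<ge> 0"
    have "ft2 (\<lambda>x z. complex_of_real (f x y z)) k1 k3 r s = IO DZ k3 r (IO DX k1 s G0) (0, y, 0)"
      by (rule ft2_IO) (simp add: G0_def lift_def)
    then show "norm (ft2 (\<lambda>x z. complex_of_real (f x y z)) k1 k3 r s - \<Phi>G (0, y, 0)) \<le> KG * w (1/3) r + KG * w (1/3) s"
      using hG[OF rs] by simp
  qed
  have Geq: "G y = \<Phi>G (0, y, 0)" for y
    unfolding assms(9) fourier2_def by (rule tendsto_Lim[OF ntl2 limG])
  have limH: "((\<lambda>(r, s). ft2 (\<lambda>y z. complex_of_real (f x y z)) k2 k3 r s) \<longlongrightarrow> \<Phi>H (x, 0, 0)) (at_top \<times>\<^sub>F at_top)" for x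
  proof (rule tendsto_rate2[OF w13_lim[of KH]])
    fix r s :: real assume rs: "r \<ge> 0" "s \<ge> 0"
    have "ft2 (\<lambda>y z. complex_of_real (f x y z)) k2 k3 r s = IO DZ k3 r (IO DY k2 s G0) (x, 0, 0)"
      by (rule ft2_IO) (simp add: G0_def lift_def)
    then show "norm (ft2 (\<lambda>y z. complex_of_real (f x y z)) k2 k3 r s - \<Phi>H (x, 0, 0)) \<le> KH * w (1/3) r + KH * w (1/3) s"
      using hH[OF rs] by simp
  qed
  have Heq: "H x = \<Phi>H (x, 0, 0)" for x
    unfolding assms(10) fourier2_def by (rule tendsto_Lim[OF ntl2 limH])
  have lim3: "((\<lambda>(r, s, t). ft3 (\<lambda>x y z. complex_of_real (f x y z)) k1 k2 k3 r s t) \<longlongrightarrow> L)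
                 (at_top \<times>\<^sub>F (at_top \<times>\<^sub>F at_top))"
  proof (rule tendsto_rate3[OF w13_lim[of K3]])
    fix r s t :: real assume rst: "r \<ge> 0" "s \<ge> 0" "t \<ge> 0"
    have "ft3 (\<lambda>x y z. complex_of_real (f x y z)) k1 k2 k3 r s t = T3 r s t"
      unfolding T3_def by (rule ft3_IO) (simp add: G0_def lift_def)
    then show "norm (ft3 (\<lambda>x y z. complex_of_real (f x y z)) k1 k2 k3 r s t - L) \<le> K3 * w (1/3) r + K3 * w (1/3) s + K3 * w (1/3) t"
      using T3L[OF rst] by simp
  qed
  define Ah where "Ah q = A (crd DY q) (crd DZ q)" for q
  define Bh where "Bh q = B (crd DX q) (crd DZ q)" for q
  define Ch where "Ch q = C (crd DX q) (crd DY q)" for q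
  define Fh where "Fh q = F (crd DZ q)" for q
  define Gh where "Gh q = G (crd DY q)" for q
  define Hh where "Hh q = H (crd DX q)" for q
  have inv1: "IO d k t G0 (upd d a q) = IO d k t G0 q" for d k t a q by (rule IO_upd)
  have bA: "norm (Ah q - IO DX k1 t G0 q) \<le> KA * w (1/3) t" if "t \<ge> 0" for t q
  proof -
    have e2: "Ah q = \<Phi>A (upd DX 0 q)" unfolding Ah_def Aeq by (cases q) simp
    show ?thesis unfolding e2 using hA[OF that, of "upd DX 0 q", unfolded inv1] by (simp add: norm_minus_commute)
  qed
  have bB: "norm (Bh q - IO DY k2 t G0 q) \<le> KB * w (1/3) t" if "t \<ge> 0" for t q
  proof -
    have e2: "Bh q = \<Phi>B (upd DY 0 q)" unfolding Bh_def Beq by (cases q) simp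
    show ?thesis unfolding e2 using hB[OF that, of "upd DY 0 q", unfolded inv1] by (simp add: norm_minus_commute)
  qed
  have bC: "norm (Ch q - IO DZ k3 t G0 q) \<le> KC * w (1/3) t" if "t \<ge> 0" for t q
  proof -
    have e2: "Ch q = \<Phi>C (upd DZ 0 q)" unfolding Ch_def Ceq by (cases q) simp
    show ?thesis unfolding e2 using hC[OF that, of "upd DZ 0 q", unfolded inv1] by (simp add: norm_minus_commute)
  qed
  have inv2: "IO d1 ka s (IO d2 kb t G0) (upd d2 a q) = IO d1 ka s (IO d2 kb t G0) q" if "d1 \<noteq> d2"
    for d1 d2 ka kb s t a q
    by (rule IO_upd_other[OF _ that]) (rule IO_upd)
  have bF: "norm (Fh q - IO DY k2 t (IO DX k1 t G0) q) \<le> (2 * KF) * w (1/3) t" if "t \<ge> 0" for t q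
  proof -
    have e2: "Fh q = \<Phi>F (upd DX 0 (upd DY 0 q))" unfolding Fh_def Feq by (cases q) simp
    have "IO DY k2 t (IO DX k1 t G0) (upd DX 0 (upd DY 0 q)) = IO DY k2 t (IO DX k1 t G0) (upd DY 0 q)"
      by (rule inv2) simp
    also have "\<dots> = IO DY k2 t (IO DX k1 t G0) q" by (rule IO_upd)
    finally have e3: "IO DY k2 t (IO DX k1 t G0) (upd DX 0 (upd DY 0 q)) = IO DY k2 t (IO DX k1 t G0) q" .
    show ?thesis unfolding e2 using hF[OF that that, of "upd DX 0 (upd DY 0 q)", unfolded e3]
      by (simp add: norm_minus_commute algebra_simps)
  qed
  have bG: "norm (Gh q - IO DZ k3 t (IO DX k1 t G0) q) \<le> (2 * KG) * w (1/3) t" if "t \<ge> 0" for t q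
  proof -
    have e2: "Gh q = \<Phi>G (upd DX 0 (upd DZ 0 q))" unfolding Gh_def Geq by (cases q) simp
    have "IO DZ k3 t (IO DX k1 t G0) (upd DX 0 (upd DZ 0 q)) = IO DZ k3 t (IO DX k1 t G0) (upd DZ 0 q)"
      by (rule inv2) simp
    also have "\<dots> = IO DZ k3 t (IO DX k1 t G0) q" by (rule IO_upd)
    finally have e3: "IO DZ k3 t (IO DX k1 t G0) (upd DX 0 (upd DZ 0 q)) = IO DZ k3 t (IO DX k1 t G0) q" .
    show ?thesis unfolding e2 using hG[OF that that, of "upd DX 0 (upd DZ 0 q)", unfolded e3]
      by (simp add: norm_minus_commute algebra_simps)
  qed
  have bH: "norm (Hh q - IO DZ k3 t (IO DY k2 t G0) q) \<le> (2 * KH) * w (1/3) t" if "t \<ge> 0" for t q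
  proof -
    have e2: "Hh q = \<Phi>H (upd DY 0 (upd DZ 0 q))" unfolding Hh_def Heq by (cases q) simp
    have "IO DZ k3 t (IO DY k2 t G0) (upd DY 0 (upd DZ 0 q)) = IO DZ k3 t (IO DY k2 t G0) (upd DZ 0 q)"
      by (rule inv2) simp
    also have "\<dots> = IO DZ k3 t (IO DY k2 t G0) q" by (rule IO_upd)
    finally have e3: "IO DZ k3 t (IO DY k2 t G0) (upd DY 0 (upd DZ 0 q)) = IO DZ k3 t (IO DY k2 t G0) q" .
    show ?thesis unfolding e2 using hH[OF that that, of "upd DY 0 (upd DZ 0 q)", unfolded e3]
      by (simp add: norm_minus_commute algebra_simps)
  qed
  have cT1: "cont (IO d k t G0)" for d k t by (intro cont_IO cG(1))
  have cT2: "cont (IO d1 ka t (IO d2 kb t G0))" for d1 d2 ka kb t by (intro cont_IO cG(1))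
  have cAh: "cont Ah" by (rule unif_cont[OF cT1]) (use bA in \<open>simp add: norm_minus_commute\<close>)
  have cBh: "cont Bh" by (rule unif_cont[OF cT1]) (use bB in \<open>simp add: norm_minus_commute\<close>)
  have cCh: "cont Ch" by (rule unif_cont[OF cT1]) (use bC in \<open>simp add: norm_minus_commute\<close>)
  have cFh: "cont Fh" by (rule unif_cont[OF cT2]) (use bF in \<open>simp add: norm_minus_commute\<close>)
  have cGh: "cont Gh" by (rule unif_cont[OF cT2]) (use bG in \<open>simp add: norm_minus_commute\<close>)
  have cHh: "cont Hh" by (rule unif_cont[OF cT2]) (use bH in \<open>simp add: norm_minus_commute\<close>)
  have limAA: "((\<lambda>(r, s). ft2 A k2 k3 r s) \<longlongrightarrow> L) (at_top \<times>\<^sub>F at_top)"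
  proof (rule tendsto_rate2[OF w13_lim[of K3]])
    fix r s :: real assume rs: "r \<ge> 0" "s \<ge> 0"
    have eq: "ft2 A k2 k3 r s = IO DZ k3 r (IO DY k2 s Ah) (0, 0, 0)"
      by (rule ft2_IO) (simp add: Ah_def)
    show "norm (ft2 A k2 k3 r s - L) \<le> K3 * w (1/3) r + K3 * w (1/3) s"
    proof (rule lim_pass)
      fix t :: real assume t: "t \<ge> 0"
      show "norm (ft2 A k2 k3 r s - T3 r s t) \<le> (4 * r * s * KA) * w (1/3) t"
        unfolding eq T3_def by (rule approx2[OF cAh cT1 bA rs t])
      show "norm (T3 r s t - L) \<le> (K3 * w (1/3) r + K3 * w (1/3) s) + K3 * w (1/3) t"
        using T3L[OF rs t] by simp
    qed
  qed
  have limBB: "((\<lambda>(r, s). ft2 B k1 k3 r s) \<longlongrightarrow> L) (at_top \<times>\<^sub>F at_top)"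
  proof (rule tendsto_rate2[OF w13_lim[of K3]])
    fix r s :: real assume rs: "r \<ge> 0" "s \<ge> 0"
    have eq: "ft2 B k1 k3 r s = IO DZ k3 r (IO DX k1 s Bh) (0, 0, 0)"
      by (rule ft2_IO) (simp add: Bh_def)
    show "norm (ft2 B k1 k3 r s - L) \<le> K3 * w (1/3) r + K3 * w (1/3) s"
    proof (rule lim_pass)
      fix t :: real assume t: "t \<ge> 0"
      have c: "IO DX k1 s (IO DY k2 t G0) = IO DY k2 t (IO DX k1 s G0)"
        by (rule IO_commute[OF _ cG(1)]) simp
      show "norm (ft2 B k1 k3 r s - T3 r t s) \<le> (4 * r * s * KB) * w (1/3) t"
        unfolding eq T3_def c[symmetric] by (rule approx2[OF cBh cT1 bB rs t])
      show "norm (T3 r t s - L) \<le> (K3 * w (1/3) r + K3 * w (1/3) s) + K3 * w (1/3) t"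
        using T3L[OF rs(1) t rs(2)] by (simp add: algebra_simps)
    qed
  qed
  have limCC: "((\<lambda>(r, s). ft2 C k1 k2 r s) \<longlongrightarrow> L) (at_top \<times>\<^sub>F at_top)"
  proof (rule tendsto_rate2[OF w13_lim[of K3]])
    fix r s :: real assume rs: "r \<ge> 0" "s \<ge> 0"
    have eq: "ft2 C k1 k2 r s = IO DY k2 r (IO DX k1 s Ch) (0, 0, 0)"
      by (rule ft2_IO) (simp add: Ch_def)
    show "norm (ft2 C k1 k2 r s - L) \<le> K3 * w (1/3) r + K3 * w (1/3) s"
    proof (rule lim_pass)
      fix t :: real assume t: "t \<ge> 0"
      have c1: "IO DX k1 s (IO DZ k3 t G0) = IO DZ k3 t (IO DX k1 s G0)"
        by (rule IO_commute[OF _ cG(1)]) simp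
      have c2: "IO DY k2 r (IO DZ k3 t (IO DX k1 s G0)) = IO DZ k3 t (IO DY k2 r (IO DX k1 s G0))"
        by (rule IO_commute[OF _ cont_IO[OF cG(1)]]) simp
      show "norm (ft2 C k1 k2 r s - T3 t r s) \<le> (4 * r * s * KC) * w (1/3) t"
        unfolding eq T3_def c2[symmetric] c1[symmetric] by (rule approx2[OF cCh cT1 bC rs t])
      show "norm (T3 t r s - L) \<le> (K3 * w (1/3) r + K3 * w (1/3) s) + K3 * w (1/3) t"
        using T3L[OF t rs] by (simp add: algebra_simps)
    qed
  qed
  have limFF: "((\<lambda>r. ft1 F k3 r) \<longlongrightarrow> L) at_top"
  proof (rule tendsto_rate1[OF w13_lim[of K3]])
    fix r :: real assume r: "r \<ge> 0"
    have eq: "ft1 F k3 r = IO DZ k3 r Fh (0, 0, 0)"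
      by (rule ft1_IO) (simp add: Fh_def)
    show "norm (ft1 F k3 r - L) \<le> K3 * w (1/3) r"
    proof (rule lim_pass)
      fix t :: real assume t: "t \<ge> 0"
      show "norm (ft1 F k3 r - T3 r t t) \<le> (2 * r * (2 * KF)) * w (1/3) t"
        unfolding eq T3_def by (rule approx1[OF cFh cT2 bF r t])
      show "norm (T3 r t t - L) \<le> K3 * w (1/3) r + (2 * K3) * w (1/3) t"
        using T3L[OF r t t] by (simp add: algebra_simps)
    qed
  qed
  have limGG: "((\<lambda>r. ft1 G k2 r) \<longlongrightarrow> L) at_top"
  proof (rule tendsto_rate1[OF w13_lim[of K3]])
    fix r :: real assume r: "r \<ge> 0"
    have eq: "ft1 G k2 r = IO DY k2 r Gh (0, 0, 0)"
      by (rule ft1_IO) (simp add: Gh_def)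
    show "norm (ft1 G k2 r - L) \<le> K3 * w (1/3) r"
    proof (rule lim_pass)
      fix t :: real assume t: "t \<ge> 0"
      have c: "IO DY k2 r (IO DZ k3 t (IO DX k1 t G0)) = IO DZ k3 t (IO DY k2 r (IO DX k1 t G0))"
        by (rule IO_commute[OF _ cont_IO[OF cG(1)]]) simp
      show "norm (ft1 G k2 r - T3 t r t) \<le> (2 * r * (2 * KG)) * w (1/3) t"
        unfolding eq T3_def c[symmetric] by (rule approx1[OF cGh cT2 bG r t])
      show "norm (T3 t r t - L) \<le> K3 * w (1/3) r + (2 * K3) * w (1/3) t"
        using T3L[OF t r t] by (simp add: algebra_simps)
    qed
  qed
  have limHH: "((\<lambda>r. ft1 H k1 r) \<longlongrightarrow> L) at_top"
  proof (rule tendsto_rate1[OF w13_lim[of K3]])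
    fix r :: real assume r: "r \<ge> 0"
    have eq: "ft1 H k1 r = IO DX k1 r Hh (0, 0, 0)"
      by (rule ft1_IO) (simp add: Hh_def)
    show "norm (ft1 H k1 r - L) \<le> K3 * w (1/3) r"
    proof (rule lim_pass)
      fix t :: real assume t: "t \<ge> 0"
      have c1: "IO DX k1 r (IO DZ k3 t (IO DY k2 t G0)) = IO DZ k3 t (IO DX k1 r (IO DY k2 t G0))"
        by (rule IO_commute[OF _ cont_IO[OF cG(1)]]) simp
      have c2: "IO DX k1 r (IO DY k2 t G0) = IO DY k2 t (IO DX k1 r G0)"
        by (rule IO_commute[OF _ cG(1)]) simp
      show "norm (ft1 H k1 r - T3 t t r) \<le> (2 * r * (2 * KH)) * w (1/3) t"
        unfolding eq T3_def c2[symmetric] c1[symmetric] by (rule approx1[OF cHh cT2 bH r t])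
      show "norm (T3 t t r - L) \<le> K3 * w (1/3) r + (2 * K3) * w (1/3) t"
        using T3L[OF t t r] by (simp add: algebra_simps)
    qed
  qed
  have fA: "\<forall>y z. ((\<lambda>r. ft1 (\<lambda>x. complex_of_real (f x y z)) k1 r) \<longlongrightarrow> A y z) at_top"
    using limA by (simp add: Aeq)
  have fB: "\<forall>x z. ((\<lambda>r. ft1 (\<lambda>y. complex_of_real (f x y z)) k2 r) \<longlongrightarrow> B x z) at_top"
    using limB by (simp add: Beq)
  have fC: "\<forall>x y. ((\<lambda>r. ft1 (\<lambda>z. complex_of_real (f x y z)) k3 r) \<longlongrightarrow> C x y) at_top"
    using limC by (simp add: Ceq)
  have fF: "\<forall>z. ((\<lambda>(r, s). ft2 (\<lambda>x y. complex_of_real (f x y z)) k1 k2 r s) \<longlongrightarrow> F z) (at_top \<times>\<^sub>F at_top)"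
    using limF by (simp add: Feq)
  have fG: "\<forall>y. ((\<lambda>(r, s). ft2 (\<lambda>x z. complex_of_real (f x y z)) k1 k3 r s) \<longlongrightarrow> G y) (at_top \<times>\<^sub>F at_top)"
    using limG by (simp add: Geq)
  have fH: "\<forall>x. ((\<lambda>(r, s). ft2 (\<lambda>y z. complex_of_real (f x y z)) k2 k3 r s) \<longlongrightarrow> H x) (at_top \<times>\<^sub>F at_top)"
    using limH by (simp add: Heq)
  show ?thesis
    by (intro conjI exI[of _ L] fA fB fC fF fG fH lim3 limAA limBB limCC limFF limGG limHH)
qed

end
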